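(* Let $\alpha = 1-\frac{1}{W_{-1}(-2/e^3)+1}\approx 1.3871$, where $W_{-1}$ is the lower real branch of the Lambert $W$-function. For any $\epsilon>0$ and $\frac12>\delta>0$, for any fully-dynamic bin packing algorithm $\mathcal{A}$ with asymptotic competitive ratio $(\alpha-\epsilon)$ and additive term $o(\epsilon\cdot n^{\delta})$, there exists a fully-dynamic bin packing input with $n$ items on which $\mathcal{A}$ uses recourse at least $\Omega(\epsilon^2\cdot n^{1-\delta})$ under unit movement costs.
   Context: Fully-dynamic bin packing: a sequence of updates, each inserting or deleting an item; each item $i$ has a size $s_i\in[0,1]$ and a movement cost $c_i\ge 0$. At each time $t$ the algorithm must maintain a packing of the current set of items $\mathcal{I}_t$ into unit-capacity bins; $OPT(\mathcal{I}_t)$ is the minimum number of unit bins needed for $\mathcal{I}_t$. Moving item $i$ between bins costs $c_i$. An algorithm has asymptotic competitive ratio $\alpha'$, additive term $\beta$ and (amortized) recourse $\gamma$ if at every time $t$ it uses at most $\alpha'\cdot OPT(\mathcal{I}_t)+\beta$ bins and its total movement cost up to time $t$ is at most $\gamma\sum_{i=1}^t c_i$, where $c_i$ is the cost of the item updated at time $i$. Unit movement costs: $c_i=1$ for all items. *)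

theory Defs
  imports Complex_Main
begin

text \<open>W_{-1}(x) for -1/e < x < 0: the unique w \<le> -1 with w * exp w = x.\<close>
definition lambertW_m1 :: "real \<Rightarrow> real" where
  "lambertW_m1 x = (THE w. w \<le> -1 \<and> w * exp w = x)"

definition alpha_lb :: real where
  "alpha_lb = 1 - 1 / (lambertW_m1 (- 2 / exp 3) + 1)"

text \<open>Items are identified by natural numbers. An update inserts an item with a
  given size or deletes an item. Unit movement costs throughout.\<close>
datatype update = Ins nat real | Del nat

fun apply_update :: "(nat \<Rightarrow> real option) \<Rightarrow> update \<Rightarrow> (nat \<Rightarrow> real option)" where
  "apply_update S (Ins i s) = S(i \<mapsto> s)"
| "apply_update S (Del i) = S(i := None)"

definition items_after :: "update list \<Rightarrow> (nat \<Rightarrow> real option)" where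
  "items_after \<sigma> = foldl apply_update Map.empty \<sigma>"

fun valid_update :: "(nat \<Rightarrow> real option) \<Rightarrow> update \<Rightarrow> bool" where
  "valid_update S (Ins i s) = (i \<notin> dom S \<and> 0 \<le> s \<and> s \<le> 1)"
| "valid_update S (Del i) = (i \<in> dom S)"

definition valid_input :: "update list \<Rightarrow> bool" where
  "valid_input \<sigma> = (\<forall>t < length \<sigma>. valid_update (items_after (take t \<sigma>)) (\<sigma> ! t))"

text \<open>The input has (at most) n items: at every time at most n items are present.\<close>
definition input_size_le :: "update list \<Rightarrow> nat \<Rightarrow> bool" where
  "input_size_le \<sigma> n = (\<forall>t \<le> length \<sigma>. card (dom (items_after (take t \<sigma>))) \<le> n)"

definition load :: "(nat \<Rightarrow> real option) \<Rightarrow> (nat \<Rightarrow> nat) \<Rightarrow> nat \<Rightarrow> real" where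
  "load S f b = (\<Sum>i \<in> {i \<in> dom S. f i = b}. the (S i))"

definition feasible_packing :: "(nat \<Rightarrow> real option) \<Rightarrow> (nat \<Rightarrow> nat) \<Rightarrow> bool" where
  "feasible_packing S f = (\<forall>b. load S f b \<le> 1)"

definition bins_used :: "(nat \<Rightarrow> real option) \<Rightarrow> (nat \<Rightarrow> nat) \<Rightarrow> nat" where
  "bins_used S f = card (f ` dom S)"

definition OPT :: "(nat \<Rightarrow> real option) \<Rightarrow> nat" where
  "OPT S = (LEAST k. \<exists>f. feasible_packing S f \<and> bins_used S f = k)"

text \<open>An (online, deterministic) algorithm maps the prefix of updates seen so far
  to the packing it maintains after that prefix.\<close>
type_synonym algorithm = "update list \<Rightarrow> (nat \<Rightarrow> nat)"

text \<open>Number of items moved at step t (items present before and after the update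
  whose bin changed); with unit costs this is the movement cost of step t.\<close>
definition moves_at :: "algorithm \<Rightarrow> update list \<Rightarrow> nat \<Rightarrow> nat" where
  "moves_at A \<sigma> t = card {i \<in> dom (items_after (take t \<sigma>)) \<inter> dom (items_after (take (Suc t) \<sigma>)).
                             A (take t \<sigma>) i \<noteq> A (take (Suc t) \<sigma>) i}"

definition total_moves :: "algorithm \<Rightarrow> update list \<Rightarrow> nat" where
  "total_moves A \<sigma> = (\<Sum>t < length \<sigma>. moves_at A \<sigma> t)"

definition competitive_on :: "algorithm \<Rightarrow> real \<Rightarrow> real \<Rightarrow> nat \<Rightarrow> bool" where
  "competitive_on A r \<beta> n =
     (\<forall>\<sigma>. valid_input \<sigma> \<and> input_size_le \<sigma> n \<longrightarrow>
        (\<forall>t \<le> length \<sigma>.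
           feasible_packing (items_after (take t \<sigma>)) (A (take t \<sigma>)) \<and>
           real (bins_used (items_after (take t \<sigma>)) (A (take t \<sigma>)))
             \<le> r * real (OPT (items_after (take t \<sigma>))) + \<beta>))"

end

theory Submission
  imports Defs
begin


lemma wexp_decr:
  assumes "w1 < w2" "w2 < -1"
  shows "w2 * exp w2 < w1 * exp (w1::real)"
proof -
  have "\<And>x. w1 \<le> x \<Longrightarrow> x \<le> w2 \<Longrightarrow> (\<exists>y. DERIV (\<lambda>w. w * exp w) x :> y \<and> y < 0)"
  proof -
    fix x assume "w1 \<le> x" "x \<le> w2"
    hence "x < -1" using assms by auto
    have "DERIV (\<lambda>w. w * exp w) x :> (1 * exp x + x * exp x)"
      by (auto intro!: derivative_eq_intros)
    moreover have "1 * exp x + x * exp x < 0"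
    proof -
      have "1 * exp x + x * exp x = (1 + x) * exp x" by (simp add: algebra_simps)
      also have "\<dots> < 0" using \<open>x < -1\<close> by (simp add: mult_neg_pos)
      finally show ?thesis .
    qed
    ultimately show "\<exists>y. DERIV (\<lambda>w. w * exp w) x :> y \<and> y < 0" by blast
  qed
  from DERIV_neg_imp_decreasing[OF assms(1) this] show ?thesis by simp
qed

lemma e_ge2: "2 \<le> exp (1::real)"
  using exp_ge_add_one_self[of 1] by simp

lemma lw_facts:
  "lambertW_m1 (- 2 / exp 3) * exp (lambertW_m1 (- 2 / exp 3)) = - 2 / exp 3
   \<and> -4 \<le> lambertW_m1 (- 2 / exp 3) \<and> lambertW_m1 (- 2 / exp 3) \<le> -3"
proof -
  define y :: real where "y = - 2 / exp 3"
  have e4: "exp (4::real) = exp 1 * exp 3" by (simp flip: exp_add)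
  have e3: "exp (3::real) = exp 1 * exp 2" by (simp flip: exp_add)
  have f4: "y \<le> (-4) * exp (-4)"
  proof -
    have "(-4) * exp (-4::real) = - 4 / exp 4" by (simp add: exp_minus field_simps)
    also have "\<dots> = - (4 / exp 1) / exp 3" using e4 by simp
    also have "- 2 / exp 3 \<le> \<dots>"
    proof -
      have "4 / exp 1 \<le> (2::real)" using e_ge2 by (simp add: divide_le_eq)
      hence "4 / exp 1 / exp 3 \<le> (2::real) / exp 3" by (rule divide_right_mono) simp
      thus ?thesis by linarith
    qed
    finally show ?thesis unfolding y_def .
  qed
  have f3: "(-3) * exp (-3) \<le> y"
    unfolding y_def by (simp add: exp_minus field_simps)
  have "\<exists>x\<ge>-4. x \<le> -3 \<and> (\<lambda>w. w * exp w) x = y"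
    by (rule IVT2'[of "\<lambda>w. w * exp w"]) (use f4 f3 in \<open>auto intro!: continuous_intros\<close>)
  then obtain w where w: "-4 \<le> w" "w \<le> -3" "w * exp w = y" by auto
  have uniq: "v = w" if "v \<le> -1" "v * exp v = y" for v
  proof -
    have "v \<noteq> -1"
    proof
      assume "v = -1"
      hence "- exp (-1) = - 2 / exp (3::real)" using that y_def by simp
      hence "exp 3 = 2 * exp (1::real)" by (simp add: exp_minus field_simps)
      hence "exp 1 * exp 2 = 2 * exp (1::real)" using e3 by simp
      hence "exp 2 = (2::real)" by simp
      moreover have "exp (2::real) = exp 1 * exp 1" by (simp flip: exp_add)
      moreover have "exp 1 * exp 1 \<ge> (2::real) * 2" using e_ge2 by (intro mult_mono) auto
      ultimately show False by simp
    qed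
    hence "v < -1" using that by simp
    show ?thesis
    proof (rule ccontr)
      assume "v \<noteq> w"
      hence "v < w \<or> w < v" by auto
      thus False
        using wexp_decr[of v w] wexp_decr[of w v] \<open>v < -1\<close> w that by auto
    qed
  qed
  have "lambertW_m1 y = w"
    unfolding lambertW_m1_def
    by (rule the_equality) (use w uniq in auto)
  thus ?thesis using w y_def by simp
qed

definition astar :: real where "astar = alpha_lb - 1"
definition theta :: real where "theta = astar / (1 + astar)"

lemma astar_facts:
  "1/3 \<le> astar \<and> astar \<le> 1/2 \<and> 1/4 \<le> theta \<and> theta \<le> 1/3 \<and>
   theta + astar * (theta + ln (1 / (2*theta)) + 1) \<le> 1 \<and> 0 \<le> ln (1 / (2*theta))"
proof -
  define W where "W = lambertW_m1 (- 2 / exp 3)"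
  have W: "W * exp W = - 2 / exp 3" "-4 \<le> W" "W \<le> -3" using lw_facts W_def by auto
  have a: "astar = - 1 / (W + 1)" unfolding astar_def alpha_lb_def W_def[symmetric]
    using W by (simp add: field_simps)
  have a1: "1/3 \<le> astar" "astar \<le> 1/2" unfolding a using W by (auto simp: field_simps)
  have th: "theta = 1 / (- W)" unfolding theta_def a using W by (simp add: field_simps)
  have t1: "1/4 \<le> theta" "theta \<le> 1/3" unfolding th using W by (auto simp: field_simps)
  have key: "ln (- W) + W = ln 2 - 3"
  proof -
    have "(- W) * exp W = 2 / exp 3" using W by simp
    hence "ln ((- W) * exp W) = ln (2 / exp 3)" by (rule arg_cong)
    moreover have "ln ((- W) * exp W) = ln (- W) + W" using W(2,3) ln_mult[of "- W" "exp W"] by simp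
    moreover have "ln (2 / exp 3) = ln 2 - (3::real)" by (simp add: ln_div)
    ultimately show ?thesis by simp
  qed
  have l0: "1 / (2*theta) = (- W) / 2" unfolding th using W by (simp add: field_simps)
  have l: "ln (1 / (2*theta)) = - 3 - W" unfolding l0 using W(2,3) ln_div[of "-W" 2] key by simp
  have W0: "W \<noteq> 0" "W + 1 \<noteq> 0" "W + W * W \<noteq> 0"
  proof -
    have "W * W \<ge> 3 * 3" using W mult_mono[of 3 "-W" 3 "-W"] by simp
    thus "W + W * W \<noteq> 0" using W by linarith
  qed (use W in auto)
  have W00: "W + W * W \<noteq> 0" "W * W + W * (W * W) \<noteq> 0" using W0
    by (simp_all add: algebra_simps) (metis W0(1) W0(2) add.commute mult_eq_0_iff distrib_left mult_1_right)
  have "theta + astar * (theta + ln (1 / (2*theta)) + 1) = 1"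
  proof -
    have "theta + astar * (theta + ln (1 / (2*theta)) + 1) = theta + astar * (theta + (- 3 - W) + 1)"
      using l by simp
    also have "\<dots> = 1" unfolding a th using W0 W00 by (simp add: field_simps)
    finally show ?thesis .
  qed
  moreover have "0 \<le> ln (1 / (2*theta))" unfolding l using W by simp
  ultimately show ?thesis using a1 t1 by simp
qed


lemma items_after_append: "items_after (xs @ ys) = foldl apply_update (items_after xs) ys"
  by (simp add: items_after_def)

lemma items_after_snoc: "items_after (xs @ [u]) = apply_update (items_after xs) u"
  by (simp add: items_after_def)

lemma finite_dom_apply_update: "finite (dom S) \<Longrightarrow> finite (dom (apply_update S u))"
  by (cases u) auto

lemma finite_dom_foldl: "finite (dom S) \<Longrightarrow> finite (dom (foldl apply_update S us))"
  by (induction us arbitrary: S) (auto simp: finite_dom_apply_update)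

lemma finite_dom_items_after: "finite (dom (items_after xs))"
  unfolding items_after_def by (rule finite_dom_foldl) simp

lemma take_append_ge: "take (length xs + t) (xs @ ys) = xs @ take t ys"
  by simp

lemma valid_input_append:
  "valid_input (xs @ ys) = (valid_input xs \<and>
     (\<forall>t<length ys. valid_update (items_after (xs @ take t ys)) (ys ! t)))"
proof -
  have "(\<forall>t<length (xs @ ys). P t) = ((\<forall>t<length xs. P t) \<and> (\<forall>t<length ys. P (length xs + t)))" for P
    by (auto, metis add_diff_inverse_nat nat_add_left_cancel_less)
  thus ?thesis unfolding valid_input_def
    by (simp add: nth_append)
qed

lemma input_size_le_append:
  "input_size_le (xs @ ys) n = (input_size_le xs n \<and>
     (\<forall>t\<le>length ys. card (dom (items_after (xs @ take t ys))) \<le> n))"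
proof -
  have "(\<forall>t\<le>length (xs @ ys). P t) = ((\<forall>t\<le>length xs. P t) \<and> (\<forall>t\<le>length ys. P (length xs + t)))" for P
    by (auto, metis add_le_cancel_left le_Suc_ex nat_le_linear)
  thus ?thesis unfolding input_size_le_def by simp
qed

lemma moves_at_prefix:
  assumes "t < length xs"
  shows "moves_at A (xs @ ys) t = moves_at A xs t"
  using assms unfolding moves_at_def by simp

lemma sum_lessThan_add_split:
  "(\<Sum>t<a+b. f t) = (\<Sum>t<a. f t) + (\<Sum>t<b. f (a + t :: nat)) " for f :: "nat \<Rightarrow> 'b::comm_monoid_add"
  by (induction b) (simp_all add: add.assoc)

lemma total_moves_append:
  "total_moves A (xs @ ys) = total_moves A xs + (\<Sum>t<length ys. moves_at A (xs @ ys) (length xs + t))"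
proof -
  have "total_moves A (xs @ ys) = (\<Sum>t<length xs + length ys. moves_at A (xs @ ys) t)"
    unfolding total_moves_def by simp
  also have "\<dots> = (\<Sum>t<length xs. moves_at A (xs @ ys) t) + (\<Sum>t<length ys. moves_at A (xs @ ys) (length xs + t))"
    by (rule sum_lessThan_add_split)
  also have "(\<Sum>t<length xs. moves_at A (xs @ ys) t) = total_moves A xs"
    unfolding total_moves_def by (rule sum.cong) (auto simp: moves_at_prefix)
  finally show ?thesis .
qed

lemma moves_lower:
  assumes "finite X" "t0 \<le> t1" "t1 \<le> length \<sigma>"
    and "\<And>t. t0 \<le> t \<Longrightarrow> t \<le> t1 \<Longrightarrow> X \<subseteq> dom (items_after (take t \<sigma>))"
  shows "card {i\<in>X. A (take t0 \<sigma>) i \<noteq> A (take t1 \<sigma>) i} \<le> (\<Sum>t\<in>{t0..<t1}. moves_at A \<sigma> t)"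
  using assms(2,3,4)
proof (induction t1 rule: dec_induct)
  case base
  then show ?case by simp
next
  case (step k)
  have IH: "card {i\<in>X. A (take t0 \<sigma>) i \<noteq> A (take k \<sigma>) i} \<le> (\<Sum>t\<in>{t0..<k}. moves_at A \<sigma> t)"
    using step by auto
  have sub: "{i\<in>X. A (take t0 \<sigma>) i \<noteq> A (take (Suc k) \<sigma>) i} \<subseteq>
     {i\<in>X. A (take t0 \<sigma>) i \<noteq> A (take k \<sigma>) i} \<union> {i\<in>X. A (take k \<sigma>) i \<noteq> A (take (Suc k) \<sigma>) i}"
    by auto
  have X1: "X \<subseteq> dom (items_after (take k \<sigma>))" "X \<subseteq> dom (items_after (take (Suc k) \<sigma>))"
    using step by auto
  have "{i\<in>X. A (take k \<sigma>) i \<noteq> A (take (Suc k) \<sigma>) i} \<subseteq>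
        {i \<in> dom (items_after (take k \<sigma>)) \<inter> dom (items_after (take (Suc k) \<sigma>)).
                             A (take k \<sigma>) i \<noteq> A (take (Suc k) \<sigma>) i}"
    using X1 by auto
  hence c2: "card {i\<in>X. A (take k \<sigma>) i \<noteq> A (take (Suc k) \<sigma>) i} \<le> moves_at A \<sigma> k"
    unfolding moves_at_def by (rule card_mono[rotated]) (simp add: finite_dom_items_after)
  have "card {i\<in>X. A (take t0 \<sigma>) i \<noteq> A (take (Suc k) \<sigma>) i} \<le>
     card ({i\<in>X. A (take t0 \<sigma>) i \<noteq> A (take k \<sigma>) i} \<union> {i\<in>X. A (take k \<sigma>) i \<noteq> A (take (Suc k) \<sigma>) i})"
    by (rule card_mono[OF _ sub]) (use assms(1) in auto)
  also have "\<dots> \<le> card {i\<in>X. A (take t0 \<sigma>) i \<noteq> A (take k \<sigma>) i} + card {i\<in>X. A (take k \<sigma>) i \<noteq> A (take (Suc k) \<sigma>) i}"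
    by (rule card_Un_le)
  also have "\<dots> \<le> (\<Sum>t\<in>{t0..<k}. moves_at A \<sigma> t) + moves_at A \<sigma> k"
    using IH c2 by simp
  also have "\<dots> = (\<Sum>t\<in>{t0..<Suc k}. moves_at A \<sigma> t)"
    using step(1) by simp
  finally show ?case .
qed


definition insl :: "nat \<Rightarrow> real \<Rightarrow> nat \<Rightarrow> update list" where
  "insl c x m = map (\<lambda>q. Ins (c+q) x) [0..<m]"
definition dell :: "nat \<Rightarrow> nat \<Rightarrow> update list" where
  "dell c m = map (\<lambda>q. Del (c+q)) [0..<m]"

lemma take_insl: "t \<le> m \<Longrightarrow> take t (insl c x m) = insl c x t"
  unfolding insl_def by (simp add: take_map)
lemma take_dell: "t \<le> m \<Longrightarrow> take t (dell c m) = dell c t"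
  unfolding dell_def by (simp add: take_map)
lemma length_insl[simp]: "length (insl c x m) = m" by (simp add: insl_def)
lemma length_dell[simp]: "length (dell c m) = m" by (simp add: dell_def)

lemma nth_insl[simp]: "t < m \<Longrightarrow> insl c x m ! t = Ins (c+t) x" by (simp add: insl_def)
lemma nth_dell[simp]: "t < m \<Longrightarrow> dell c m ! t = Del (c+t)" by (simp add: dell_def)

lemma foldl_insl: "foldl apply_update S (insl c x t) = (\<lambda>i. if c \<le> i \<and> i < c+t then Some x else S i)"
  by (induction t) (auto simp: insl_def fun_eq_iff)
lemma foldl_dell: "foldl apply_update S (dell c t) = (\<lambda>i. if c \<le> i \<and> i < c+t then None else S i)"
  by (induction t) (auto simp: dell_def fun_eq_iff)

lemma items_after_insl: "items_after (xs @ insl c x t) = (\<lambda>i. if c \<le> i \<and> i < c+t then Some x else items_after xs i)"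
  by (simp add: items_after_append foldl_insl)
lemma items_after_dell: "items_after (xs @ dell c t) = (\<lambda>i. if c \<le> i \<and> i < c+t then None else items_after xs i)"
  by (simp add: items_after_append foldl_dell)

lemma valid_insl:
  assumes "valid_input xs" "\<And>i. c \<le> i \<Longrightarrow> i < c + m \<Longrightarrow> items_after xs i = None" "0 \<le> x" "x \<le> 1"
  shows "valid_input (xs @ insl c x m)"
  unfolding valid_input_append using assms
  by (auto simp: take_insl items_after_insl)

lemma valid_dell:
  assumes "valid_input xs" "\<And>i. c \<le> i \<Longrightarrow> i < c + m \<Longrightarrow> items_after xs i \<noteq> None"
  shows "valid_input (xs @ dell c m)"
  unfolding valid_input_append using assms
  by (auto simp: take_dell items_after_dell)

lemma input_size_le_last: "input_size_le xs n \<Longrightarrow> card (dom (items_after xs)) \<le> n"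
  unfolding input_size_le_def by (metis order_refl take_all)

lemma size_insl:
  assumes "input_size_le xs n" "card (dom (items_after xs) \<union> {c..<c+m}) \<le> n"
  shows "input_size_le (xs @ insl c x m) n"
  unfolding input_size_le_append
proof (intro conjI allI impI)
  fix t assume "t \<le> length (insl c x m)"
  hence t: "t \<le> m" by simp
  have "dom (items_after (xs @ take t (insl c x m))) \<subseteq> dom (items_after xs) \<union> {c..<c+m}"
    using t by (auto simp: take_insl items_after_insl split: if_splits)
  hence "card (dom (items_after (xs @ take t (insl c x m)))) \<le> card (dom (items_after xs) \<union> {c..<c+m})"
    by (rule card_mono[rotated]) (simp add: finite_dom_items_after)
  thus "card (dom (items_after (xs @ take t (insl c x m)))) \<le> n" using assms(2) by simp
qed (rule assms(1))

lemma size_dell: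
  assumes "input_size_le xs n"
  shows "input_size_le (xs @ dell c m) n"
  unfolding input_size_le_append
proof (intro conjI allI impI)
  fix t assume "t \<le> length (dell c m)"
  hence t: "t \<le> m" by simp
  have "dom (items_after (xs @ take t (dell c m))) \<subseteq> dom (items_after xs)"
    using t by (auto simp: take_dell items_after_dell split: if_splits)
  hence "card (dom (items_after (xs @ take t (dell c m)))) \<le> card (dom (items_after xs))"
    by (rule card_mono[rotated]) (simp add: finite_dom_items_after)
  thus "card (dom (items_after (xs @ take t (dell c m)))) \<le> n" using input_size_le_last[OF assms] by simp
qed (rule assms(1))

lemma valid_Nil: "valid_input []" by (simp add: valid_input_def)
lemma size_Nil: "input_size_le [] n" by (simp add: input_size_le_def items_after_def)
lemma items_after_Nil: "items_after [] = Map.empty" by (simp add: items_after_def)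


lemma card_filter_sum: "finite A \<Longrightarrow> card {x\<in>A. P x} = (\<Sum>x\<in>A. if P x then 1 else 0)"
  by (simp add: sum.inter_filter[symmetric])

lemma sum_fibers:
  fixes f :: "nat \<Rightarrow> nat"
  shows "(\<Sum>b\<in>f ` {..<M}. card {i. i < M \<and> f i = b}) = M"
proof -
  have "{..<M} = (\<Union>b\<in>f ` {..<M}. {i. i < M \<and> f i = b})" by auto
  hence "card {..<M} = card (\<Union>b\<in>f ` {..<M}. {i. i < M \<and> f i = b})" by simp
  also have "\<dots> = (\<Sum>b\<in>f ` {..<M}. card {i. i < M \<and> f i = b})"
    by (rule card_UN_disjoint) auto
  finally show ?thesis by simp
qed

lemma layer_cake:
  fixes f :: "nat \<Rightarrow> nat"
  assumes "\<And>b. card {i. i < M \<and> f i = b} \<le> L"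
  shows "M = (\<Sum>j<L. card {b\<in>f ` {..<M}. j < card {i. i < M \<and> f i = b}})"
proof -
  define c where "c b = card {i. i < M \<and> f i = b}" for b
  have "M = (\<Sum>b\<in>f ` {..<M}. c b)" using sum_fibers[where f=f and M=M] by (simp add: c_def)
  also have "\<dots> = (\<Sum>b\<in>f ` {..<M}. \<Sum>j<L. if j < c b then 1 else 0)"
  proof (rule sum.cong[OF refl])
    fix b
    have "c b \<le> L" using assms c_def by simp
    hence "{j\<in>{..<L}. j < c b} = {..<c b}" by auto
    hence "c b = card {j\<in>{..<L}. j < c b}" by simp
    also have "\<dots> = (\<Sum>j<L. if j < c b then 1 else 0)" by (rule card_filter_sum) simp
    finally show "c b = (\<Sum>j<L. if j < c b then 1 else 0)" .
  qed
  also have "\<dots> = (\<Sum>j<L. \<Sum>b\<in>f ` {..<M}. if j < c b then 1 else 0)" by (rule sum.swap)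
  also have "\<dots> = (\<Sum>j<L. card {b\<in>f ` {..<M}. j < c b})"
    by (rule sum.cong[OF refl]) (rule card_filter_sum[symmetric], simp)
  finally show ?thesis by (simp add: c_def)
qed

lemma moved_bound:
  fixes f0 f1 :: "nat \<Rightarrow> nat" and h j :: nat
  assumes "h > 0"
  shows "real (card {b\<in>f0 ` {..<M}. j + h < card {i. i < M \<and> f0 i = b}})
    \<le> real (card {b. j < card {i. i < M \<and> f0 i = b \<and> f1 i = b}})
      + real (card {i. i < M \<and> f0 i \<noteq> f1 i}) / real h"
proof -
  define c where "c b = card {i. i < M \<and> f0 i = b}" for b
  define u where "u b = card {i. i < M \<and> f0 i = b \<and> f1 i = b}" for b
  define v where "v b = card {i. i < M \<and> f0 i = b \<and> f1 i \<noteq> b}" for b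
  define Img where "Img = f0 ` {..<M}"
  define X where "X = {b\<in>Img. j + h < c b \<and> u b \<le> j}"
  have finImg: "finite Img" by (simp add: Img_def)
  have cuv: "c b = u b + v b" for b
  proof -
    have "{i. i < M \<and> f0 i = b} = {i. i < M \<and> f0 i = b \<and> f1 i = b} \<union> {i. i < M \<and> f0 i = b \<and> f1 i \<noteq> b}" by auto
    moreover have "card ({i. i < M \<and> f0 i = b \<and> f1 i = b} \<union> {i. i < M \<and> f0 i = b \<and> f1 i \<noteq> b}) =
       card {i. i < M \<and> f0 i = b \<and> f1 i = b} + card {i. i < M \<and> f0 i = b \<and> f1 i \<noteq> b}"
      by (rule card_Un_disjoint) auto
    ultimately show ?thesis by (simp add: c_def u_def v_def)
  qed
  have sub: "{b\<in>Img. j + h < c b} \<subseteq> {b. j < u b} \<union> X" by (auto simp: X_def)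
  have finU: "finite {b. j < u b}"
  proof (rule finite_subset[OF _ finImg])
    show "{b. j < u b} \<subseteq> Img"
    proof
      fix b assume "b \<in> {b. j < u b}"
      hence "{i. i < M \<and> f0 i = b \<and> f1 i = b} \<noteq> {}" unfolding u_def by (metis (no_types, lifting) card.empty less_nat_zero_code mem_Collect_eq)
      thus "b \<in> Img" unfolding Img_def by auto
    qed
  qed
  have finX: "finite X" using finImg by (simp add: X_def)
  have c1: "card {b\<in>Img. j + h < c b} \<le> card {b. j < u b} + card X"
    by (rule order_trans[OF card_mono[OF _ sub] card_Un_le]) (use finU finX in auto)
  have "h * card X = (\<Sum>b\<in>X. h)" by simp
  also have "\<dots> \<le> (\<Sum>b\<in>X. v b)"
  proof (rule sum_mono)
    fix b assume "b \<in> X"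
    thus "h \<le> v b" using cuv[of b] by (simp add: X_def)
  qed
  also have "\<dots> = card (\<Union>b\<in>X. {i. i < M \<and> f0 i = b \<and> f1 i \<noteq> b})"
    unfolding v_def by (rule card_UN_disjoint[symmetric]) (use finX in auto)
  also have "\<dots> \<le> card {i. i < M \<and> f0 i \<noteq> f1 i}"
    by (rule card_mono) auto
  finally have c2: "h * card X \<le> card {i. i < M \<and> f0 i \<noteq> f1 i}" .
  have "real (card X) \<le> real (card {i. i < M \<and> f0 i \<noteq> f1 i}) / real h"
  proof -
    have "real h * real (card X) \<le> real (card {i. i < M \<and> f0 i \<noteq> f1 i})"
      using c2 by (metis of_nat_le_iff of_nat_mult)
    thus ?thesis using assms by (simp add: le_divide_eq mult.commute)
  qed
  thus ?thesis using c1 unfolding Img_def c_def u_def by linarith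
qed


lemma harm_bound:
  assumes "2 \<le> j0" "j0 \<le> P"
  shows "(\<Sum>j\<in>{j0..<P}. 1 / real j) \<le> ln (real P - 1) - ln (real j0 - 1)"
  using assms(2)
proof (induction P rule: dec_induct)
  case base thus ?case by simp
next
  case (step P)
  have P2: "2 \<le> P" using assms step by simp
  have "1 / real P \<le> ln (real P) - ln (real P - 1)"
  proof -
    have "ln (1 - 1 / real P) \<le> (1 - 1 / real P) - 1" by (rule ln_le_minus_one) (use P2 in simp)
    moreover have "ln (1 - 1 / real P) = ln (real P - 1) - ln (real P)"
    proof -
      have "1 - 1 / real P = (real P - 1) / real P" using P2 by (simp add: field_simps)
      thus ?thesis using P2 by (simp add: ln_div)
    qed
    ultimately show ?thesis by simp
  qed
  thus ?case using step by simp
qed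

lemma sum_split3:
  fixes N :: "nat \<Rightarrow> real"
  assumes "a \<le> b" "b \<le> c"
  shows "(\<Sum>j<c. N j) = (\<Sum>j<a. N j) + (\<Sum>j\<in>{a..<b}. N j) + (\<Sum>j\<in>{b..<c}. N j)"
proof -
  have "(\<Sum>j<c. N j) = (\<Sum>j\<in>{0..<c}. N j)" by (simp add: atLeast0LessThan)
  also have "\<dots> = (\<Sum>j\<in>{0..<b}. N j) + (\<Sum>j\<in>{b..<c}. N j)"
    by (rule sum.atLeastLessThan_concat[symmetric]) (use assms in auto)
  also have "(\<Sum>j\<in>{0..<b}. N j) = (\<Sum>j\<in>{0..<a}. N j) + (\<Sum>j\<in>{a..<b}. N j)"
    by (rule sum.atLeastLessThan_concat[symmetric]) (use assms in auto)
  finally show ?thesis by (simp add: atLeast0LessThan)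
qed

lemma layer_ineq:
  fixes N :: "nat \<Rightarrow> real" and a Bv E KL :: real
  assumes sumN: "KL = (\<Sum>j<L. N j)"
    and anti: "\<And>x y. x \<le> y \<Longrightarrow> N y \<le> N x"
    and NB: "\<And>x. N x \<le> Bv"
    and Nb: "\<And>j. j0 \<le> j \<Longrightarrow> j < P \<Longrightarrow> N (j + h) \<le> a * KL / real j + E"
    and prm: "j0 + h \<le> P" "j0 < P" "P + h \<le> L"
  shows "KL \<le> real (j0 + h) * Bv + (\<Sum>j\<in>{j0..<P}. a * KL / real j + E)
              + real (L - (P + h)) * (a * KL / real (P - 1) + E)"
proof -
  have s: "(\<Sum>j<L. N j) = (\<Sum>j<j0+h. N j) + (\<Sum>j\<in>{j0+h..<P+h}. N j) + (\<Sum>j\<in>{P+h..<L}. N j)"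
    by (rule sum_split3) (use prm in auto)
  have t1: "(\<Sum>j<j0+h. N j) \<le> real (j0 + h) * Bv"
    using sum_mono[of "{..<j0+h}" N "\<lambda>_. Bv"] NB by simp
  have t2: "(\<Sum>j\<in>{j0+h..<P+h}. N j) \<le> (\<Sum>j\<in>{j0..<P}. a * KL / real j + E)"
  proof -
    have "(\<Sum>j\<in>{j0+h..<P+h}. N j) = (\<Sum>j\<in>{j0..<P}. N (j + h))"
      by (rule sum.shift_bounds_nat_ivl)
    also have "\<dots> \<le> (\<Sum>j\<in>{j0..<P}. a * KL / real j + E)"
      by (rule sum_mono) (use Nb in auto)
    finally show ?thesis .
  qed
  have t3: "(\<Sum>j\<in>{P+h..<L}. N j) \<le> real (L - (P + h)) * (a * KL / real (P - 1) + E)"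
  proof -
    have "(\<Sum>j\<in>{P+h..<L}. N j) \<le> (\<Sum>j\<in>{P+h..<L}. a * KL / real (P - 1) + E)"
    proof (rule sum_mono)
      fix j assume j: "j \<in> {P+h..<L}"
      have "N j \<le> N (P - 1 + h)" by (rule anti) (use j in auto)
      also have "\<dots> \<le> a * KL / real (P - 1) + E" by (rule Nb) (use prm in auto)
      finally show "N j \<le> a * KL / real (P - 1) + E" .
    qed
    thus ?thesis by simp
  qed
  show ?thesis using s t1 t2 t3 sumN by linarith
qed


definition S0 :: "nat \<Rightarrow> real \<Rightarrow> nat \<Rightarrow> real option" where
  "S0 M s = (\<lambda>i. if i < M then Some s else None)"
definition Sb :: "nat \<Rightarrow> real \<Rightarrow> nat \<Rightarrow> real \<Rightarrow> nat \<Rightarrow> real option" where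
  "Sb M s m x = (\<lambda>i. if i < M then Some s else if i < M + m then Some x else None)"

lemma OPT_le:
  assumes "feasible_packing S f" "f ` dom S \<subseteq> B" "finite B"
  shows "OPT S \<le> card B"
proof -
  have "OPT S \<le> bins_used S f" unfolding OPT_def by (rule Least_le) (use assms in blast)
  also have "\<dots> \<le> card B" unfolding bins_used_def by (rule card_mono[OF assms(3,2)])
  finally show ?thesis .
qed

lemma dom_S0: "dom (S0 M s) = {..<M}" by (auto simp: S0_def split: if_splits)
lemma dom_Sb: "dom (Sb M s m x) = {..<M+m}" by (auto simp: Sb_def split: if_splits)

lemma load_S0: "load (S0 M s) f b = real (card {i. i < M \<and> f i = b}) * s"
proof -
  have "{i \<in> dom (S0 M s). f i = b} = {i. i < M \<and> f i = b}" by (auto simp: dom_S0)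
  moreover have "(\<Sum>i\<in>{i. i < M \<and> f i = b}. the (S0 M s i)) = (\<Sum>i\<in>{i. i < M \<and> f i = b}. s)"
    by (rule sum.cong) (auto simp: S0_def)
  ultimately show ?thesis unfolding load_def by simp
qed

lemma card_div_fiber: "L > 0 \<Longrightarrow> card {i. i < M \<and> i div L = b} \<le> (L::nat)"
proof -
  assume L0: "L > 0"
  have "{i. i < M \<and> i div L = b} \<subseteq> {b*L..<b*L+L}"
  proof
    fix i assume "i \<in> {i. i < M \<and> i div L = b}"
    hence "i div L = b" by simp
    have "b * L \<le> i" using \<open>i div L = b\<close> div_times_less_eq_dividend by blast
    moreover have "i < b * L + L"
    proof -
      have "i = i div L * L + i mod L" by simp
      moreover have "i mod L < L" using L0 by simp
      ultimately show ?thesis using \<open>i div L = b\<close> by (metis add_less_cancel_left)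
    qed
    ultimately show "i \<in> {b*L..<b*L+L}" by simp
  qed
  hence "card {i. i < M \<and> i div L = b} \<le> card {b*L..<b*L+L}" by (rule card_mono[rotated]) simp
  thus ?thesis by simp
qed

lemma OPT_S0:
  assumes "L > 0"
  shows "OPT (S0 (K*L) (1 / real L)) \<le> K"
proof -
  have feas: "feasible_packing (S0 (K*L) (1 / real L)) (\<lambda>i. i div L)"
    unfolding feasible_packing_def load_S0
  proof
    fix b
    have "real (card {i. i < K*L \<and> i div L = b}) \<le> real L" using card_div_fiber[OF assms] by simp
    thus "real (card {i. i < K * L \<and> i div L = b}) * (1 / real L) \<le> 1"
      using assms by (simp add: divide_le_eq)
  qed
  have "(\<lambda>i. i div L) ` dom (S0 (K*L) (1 / real L)) \<subseteq> {..<K}"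
    unfolding dom_S0 using assms by (auto simp: less_mult_imp_div_less)
  from OPT_le[OF feas this] show ?thesis by simp
qed

lemma load_Sb: "load (Sb M s m x) f b =
   real (card {i. i < M \<and> f i = b}) * s + real (card {i. M \<le> i \<and> i < M + m \<and> f i = b}) * x"
proof -
  have eq: "{i \<in> dom (Sb M s m x). f i = b} = {i. i < M \<and> f i = b} \<union> {i. M \<le> i \<and> i < M + m \<and> f i = b}"
    by (auto simp: dom_Sb)
  have fin1: "finite {i. i < M \<and> f i = b}" by simp
  have fin2: "finite {i. M \<le> i \<and> i < M + m \<and> f i = b}" by (rule finite_subset[of _ "{..<M+m}"]) auto
  have "load (Sb M s m x) f b = (\<Sum>i\<in>{i. i < M \<and> f i = b}. the (Sb M s m x i)) +
       (\<Sum>i\<in>{i. M \<le> i \<and> i < M + m \<and> f i = b}. the (Sb M s m x i))"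
    unfolding load_def eq by (rule sum.union_disjoint[OF fin1 fin2]) auto
  also have "(\<Sum>i\<in>{i. i < M \<and> f i = b}. the (Sb M s m x i)) = (\<Sum>i\<in>{i. i < M \<and> f i = b}. s)"
    by (rule sum.cong) (auto simp: Sb_def)
  also have "(\<Sum>i\<in>{i. M \<le> i \<and> i < M + m \<and> f i = b}. the (Sb M s m x i)) =
      (\<Sum>i\<in>{i. M \<le> i \<and> i < M + m \<and> f i = b}. x)"
    by (rule sum.cong) (auto simp: Sb_def)
  finally show ?thesis by simp
qed

lemma OPT_Sb:
  assumes "j > 0" "0 \<le> s" "0 \<le> x" "real j * s + x \<le> 1"
  shows "OPT (Sb M s (M div j) x) \<le> M div j + 1"
proof -
  define m where "m = M div j"
  define f where "f = (\<lambda>i. if i < M then i div j else i - M)"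
  have feas: "feasible_packing (Sb M s m x) f"
    unfolding feasible_packing_def load_Sb
  proof
    fix b
    have "{i. i < M \<and> f i = b} = {i. i < M \<and> i div j = b}" by (auto simp: f_def)
    hence c1: "real (card {i. i < M \<and> f i = b}) \<le> real j" using card_div_fiber[OF assms(1)] by simp
    have "{i. M \<le> i \<and> i < M + m \<and> f i = b} \<subseteq> {M + b}" by (auto simp: f_def)
    hence "card {i. M \<le> i \<and> i < M + m \<and> f i = b} \<le> card {M+b}" by (rule card_mono[rotated]) simp
    hence c2: "real (card {i. M \<le> i \<and> i < M + m \<and> f i = b}) \<le> 1" by simp
    have "real (card {i. i < M \<and> f i = b}) * s \<le> real j * s" using c1 assms by (simp add: mult_right_mono)
    moreover have "real (card {i. M \<le> i \<and> i < M + m \<and> f i = b}) * x \<le> 1 * x"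
      using c2 assms by (intro mult_right_mono) auto
    ultimately show "real (card {i. i < M \<and> f i = b}) * s + real (card {i. M \<le> i \<and> i < M + m \<and> f i = b}) * x \<le> 1"
      using assms by simp
  qed
  have "f ` dom (Sb M s m x) \<subseteq> {..m}"
  proof
    fix b assume "b \<in> f ` dom (Sb M s m x)"
    then obtain i where i: "i < M + m" "b = f i" by (auto simp: dom_Sb)
    show "b \<in> {..m}"
    proof (cases "i < M")
      case True
      hence "i div j \<le> M div j" by (simp add: div_le_mono)
      thus ?thesis using i True by (simp add: f_def m_def)
    next
      case False thus ?thesis using i by (simp add: f_def)
    qed
  qed
  from OPT_le[OF feas this] show ?thesis by (simp add: m_def)
qed

lemma small_fiber_bound:
  assumes "feasible_packing (S0 M s) f0" "0 < s"
  shows "real (card {i. i < M \<and> f0 i = b}) * s \<le> 1"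
  using assms unfolding feasible_packing_def load_S0 by blast

lemma big_lower:
  assumes feas: "feasible_packing (Sb M s m x) f1" and s: "0 < s" and x: "1 < 2 * x"
    and jx: "1 < real (Suc j) * s + x"
  shows "m + card {b. j < card {i. i < M \<and> f0 i = b \<and> f1 i = b}} \<le> bins_used (Sb M s m x) f1"
proof -
  define G where "G = {b. j < card {i. i < M \<and> f0 i = b \<and> f1 i = b}}"
  have ld: "real (card {i. i < M \<and> f1 i = b}) * s + real (card {i. M \<le> i \<and> i < M + m \<and> f1 i = b}) * x \<le> 1" for b
    using feas unfolding feasible_packing_def load_Sb by blast
  have x0: "0 < x" using x by simp
  have finB: "finite {i. M \<le> i \<and> i < M + m \<and> f1 i = b}" for b
    by (rule finite_subset[of _ "{..<M+m}"]) auto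
  have inj: "inj_on f1 {M..<M+m}"
  proof (rule inj_onI, rule ccontr)
    fix i i' assume ii: "i \<in> {M..<M+m}" "i' \<in> {M..<M+m}" "f1 i = f1 i'" "i \<noteq> i'"
    have "{i, i'} \<subseteq> {k. M \<le> k \<and> k < M + m \<and> f1 k = f1 i}" using ii by auto
    hence "card {i, i'} \<le> card {k. M \<le> k \<and> k < M + m \<and> f1 k = f1 i}" by (rule card_mono[OF finB])
    hence "2 \<le> card {k. M \<le> k \<and> k < M + m \<and> f1 k = f1 i}" using ii by simp
    hence "2 * x \<le> real (card {k. M \<le> k \<and> k < M + m \<and> f1 k = f1 i}) * x"
      using x0 by (intro mult_right_mono) auto
    moreover have "0 \<le> real (card {k. k < M \<and> f1 k = f1 i}) * s" using s by simp
    ultimately show False using ld[of "f1 i"] x by linarith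
  qed
  have disj: "f1 ` {M..<M+m} \<inter> G = {}"
  proof (rule ccontr)
    assume "f1 ` {M..<M+m} \<inter> G \<noteq> {}"
    then obtain i where i: "i \<in> {M..<M+m}" "f1 i \<in> G" by blast
    define b where "b = f1 i"
    have "{k. k < M \<and> f0 k = b \<and> f1 k = b} \<subseteq> {k. k < M \<and> f1 k = b}" by auto
    hence "card {k. k < M \<and> f0 k = b \<and> f1 k = b} \<le> card {k. k < M \<and> f1 k = b}" by (rule card_mono[rotated]) simp
    hence c1: "Suc j \<le> card {k. k < M \<and> f1 k = b}" using i(2) by (simp add: G_def b_def)
    have "{i} \<subseteq> {k. M \<le> k \<and> k < M + m \<and> f1 k = b}" using i by (auto simp: b_def)
    hence "card {i} \<le> card {k. M \<le> k \<and> k < M + m \<and> f1 k = b}" by (rule card_mono[OF finB])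
    hence c2: "1 \<le> card {k. M \<le> k \<and> k < M + m \<and> f1 k = b}" by simp
    have "real (Suc j) * s \<le> real (card {k. k < M \<and> f1 k = b}) * s"
      using c1 s by (intro mult_right_mono) auto
    moreover have "1 * x \<le> real (card {k. M \<le> k \<and> k < M + m \<and> f1 k = b}) * x"
      using c2 x0 by (intro mult_right_mono) auto
    ultimately show False using ld[of b] jx by linarith
  qed
  have sub: "f1 ` {M..<M+m} \<union> G \<subseteq> f1 ` dom (Sb M s m x)"
  proof
    fix b assume "b \<in> f1 ` {M..<M+m} \<union> G"
    thus "b \<in> f1 ` dom (Sb M s m x)"
    proof
      assume "b \<in> f1 ` {M..<M+m}" thus ?thesis by (auto simp: dom_Sb)
    next
      assume "b \<in> G"
      hence "j < card {i. i < M \<and> f0 i = b \<and> f1 i = b}" unfolding G_def by blast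
      hence "{i. i < M \<and> f0 i = b \<and> f1 i = b} \<noteq> {}" by (metis card.empty less_nat_zero_code)
      then obtain i where "i < M" "f1 i = b" by auto
      thus ?thesis by (auto simp: dom_Sb image_iff intro!: bexI[of _ i])
    qed
  qed
  have finI: "finite (f1 ` dom (Sb M s m x))" by (simp add: dom_Sb)
  have finG: "finite G" by (rule finite_subset[OF _ finI]) (use sub in auto)
  have "card (f1 ` {M..<M+m} \<union> G) = card (f1 ` {M..<M+m}) + card G"
    by (rule card_Un_disjoint) (use finG disj in auto)
  also have "card (f1 ` {M..<M+m}) = m" using card_image[OF inj] by simp
  finally have "m + card G = card (f1 ` {M..<M+m} \<union> G)" by simp
  also have "\<dots> \<le> bins_used (Sb M s m x) f1" unfolding bins_used_def by (rule card_mono[OF finI sub])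
  finally show ?thesis unfolding G_def .
qed


lemma lin_helper:
  fixes u1 u2 u3 u4 u5 u6 u7 u8 v2 v3 v4 v5 w b e :: real
  assumes "1 \<le> u1 + u2 + u3 + u4 + b + u5" "u5 = u6 + b + u7"
    "u7 \<le> e / 32" "u1 \<le> 1 - e / 2" "u2 \<le> e / 16" "u3 \<le> v3" "u4 \<le> v4" "u6 \<le> v5"
    "v3 + v4 + v5 + w < e / 32" "w = b + b" "0 < e"
  shows False
  using assms by linarith

lemma numeric_contra:
  fixes X Y a \<beta> E H \<theta> \<eta> \<mu> \<epsilon> C ast D Bv :: real and P j0 h L :: nat
  assumes main: "X * Y \<le> real (j0 + h) * Bv + (\<Sum>j\<in>{j0..<P}. a * (X * Y) / real j + E)
              + real (L - (P + h)) * (a * (X * Y) / real (P - 1) + E)"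
    and Y: "Y = real L" "L = 2 * P" and X: "1 \<le> X"
    and jP: "j0 + h \<le> P" "2 \<le> j0"
    and Bv: "Bv \<le> (1 + a) * X + \<beta>" and b0: "0 \<le> \<beta>"
    and a: "0 \<le> a" "a \<le> 1" "a = ast - \<epsilon> / 2"
    and E: "E = (1 + a) + \<beta> + D / real h"
    and H: "(\<Sum>j\<in>{j0..<P}. 1 / real j) \<le> ln (1 / (2 * \<theta>))"
    and j0: "real j0 \<le> \<theta> * Y + 2" and h: "\<eta> * Y \<le> real h" "real h \<le> \<eta> * Y + 1"
    and eta: "\<eta> = \<epsilon> / 32" and mu: "\<mu> = \<epsilon>^2 / 1024" and D: "D \<le> \<mu> * (X * Y)" "0 \<le> D"
    and small: "6 / Y + 1 / real (P - 1) + 2 / X + 2 * \<beta> / X < \<epsilon> / 32"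
    and C: "C = \<theta> + ln (1 / (2 * \<theta>)) + 1" "1 \<le> C" "\<theta> + ast * C \<le> 1" "0 \<le> \<theta>"
    and eps: "0 < \<epsilon>"
  shows False
proof -
  have P2: "2 \<le> P" using jP by simp
  have Ypos: "0 < Y" using Y P2 by simp
  have XY: "0 < X * Y" using X Ypos by simp
  have "0 < \<eta>" using eta eps by simp
  hence "0 < \<eta> * Y" using Ypos by simp
  hence h0: "0 < real h" using h by linarith
  have E0: "0 \<le> E" using E a b0 D h0 by simp
  have T2: "(\<Sum>j\<in>{j0..<P}. a * (X * Y) / real j + E) \<le> a * (X * Y) * ln (1 / (2 * \<theta>)) + real (P - j0) * E"
  proof -
    have "(\<Sum>j\<in>{j0..<P}. a * (X * Y) / real j + E) = a * (X * Y) * (\<Sum>j\<in>{j0..<P}. 1 / real j) + real (P - j0) * E"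
      by (simp add: sum.distrib sum_distrib_left)
    also have "\<dots> \<le> a * (X * Y) * ln (1 / (2 * \<theta>)) + real (P - j0) * E"
      using H a XY by (simp add: mult_left_mono)
    finally show ?thesis .
  qed
  have T3: "real (L - (P + h)) * (a * (X * Y) / real (P - 1) + E) \<le> a * (X * Y) * (1 + 1 / real (P - 1)) + real (L - (P + h)) * E"
  proof -
    have "real (L - (P + h)) \<le> real P" using Y by simp
    hence "real (L - (P + h)) * (a * (X * Y) / real (P - 1)) \<le> real P * (a * (X * Y) / real (P - 1))"
      using a XY P2 by (intro mult_right_mono) auto
    also have "real P * (a * (X * Y) / real (P - 1)) = a * (X * Y) * (1 + 1 / real (P - 1))"
      using P2 by (simp add: field_simps of_nat_diff)
    finally show ?thesis by (simp add: distrib_left)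
  qed
  have T1: "real (j0 + h) * Bv \<le> ((\<theta> + \<eta>) * Y + 3) * (1 + a) * X + Y * \<beta>"
  proof -
    have "real (j0 + h) * Bv \<le> real (j0 + h) * ((1 + a) * X + \<beta>)" using Bv by (simp add: mult_left_mono)
    also have "\<dots> = real (j0 + h) * (1 + a) * X + real (j0 + h) * \<beta>" by (simp add: algebra_simps)
    also have "real (j0 + h) * (1 + a) * X \<le> ((\<theta> + \<eta>) * Y + 3) * (1 + a) * X"
      using j0 h a X by (intro mult_right_mono) (auto simp: algebra_simps)
    also have "real (j0 + h) * \<beta> \<le> Y * \<beta>" using jP Y b0 by (intro mult_right_mono) auto
    finally show ?thesis by simp
  qed
  have T4: "real (P - j0) * E + real (L - (P + h)) * E \<le> Y * E"
  proof -
    have "real (P - j0) + real (L - (P + h)) \<le> Y" using Y jP by simp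
    thus ?thesis using E0 by (metis distrib_right mult_right_mono)
  qed
  have big: "X * Y \<le> ((\<theta> + \<eta>) * Y + 3) * (1 + a) * X + Y * \<beta> + a * (X * Y) * ln (1 / (2 * \<theta>))
       + a * (X * Y) * (1 + 1 / real (P - 1)) + Y * E"
    using main T1 T2 T3 T4 by linarith
  have div: "1 \<le> (\<theta> + \<eta>) * (1 + a) + 3 * (1 + a) / Y + \<beta> / X + a * ln (1 / (2 * \<theta>))
       + a * (1 + 1 / real (P - 1)) + E / X"
  proof -
    have "X * Y / (X * Y) \<le> (((\<theta> + \<eta>) * Y + 3) * (1 + a) * X + Y * \<beta> + a * (X * Y) * ln (1 / (2 * \<theta>))
       + a * (X * Y) * (1 + 1 / real (P - 1)) + Y * E) / (X * Y)"
      using divide_right_mono[OF big, of "X * Y"] XY by linarith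
    also have "\<dots> = (\<theta> + \<eta>) * (1 + a) + 3 * (1 + a) / Y + \<beta> / X + a * ln (1 / (2 * \<theta>))
       + a * (1 + 1 / real (P - 1)) + E / X"
      using XY Ypos X by (simp add: field_simps)
    moreover have "X * Y / (X * Y) = 1" using XY by (intro divide_self) linarith
    ultimately show ?thesis by linarith
  qed
  have DX: "D / real h / X \<le> \<epsilon> / 32"
  proof -
    have "D / real h / X = D / (real h * X)" by simp
    also have "\<dots> \<le> \<mu> * (X * Y) / (real h * X)" using h0 X by (intro divide_right_mono[OF D(1)]) simp
    also have "\<dots> = \<mu> * Y / real h" using X h0 by (simp add: field_simps)
    also have "\<dots> \<le> \<mu> * Y / (\<eta> * Y)"
      using h h0 Ypos mu eta eps by (intro divide_left_mono) auto
    also have "\<dots> = \<epsilon> / 32" using Ypos eps by (simp add: mu eta field_simps power2_eq_square)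
    finally show ?thesis .
  qed
  have EX: "E / X = (1 + a) / X + \<beta> / X + D / real h / X" using E by (simp add: add_divide_distrib)
  have core: "\<theta> * (1 + a) + a * ln (1 / (2 * \<theta>)) + a \<le> 1 - \<epsilon> / 2"
  proof -
    have "\<theta> * (1 + a) + a * ln (1 / (2 * \<theta>)) + a = \<theta> + a * C" using C by (simp add: algebra_simps)
    also have "\<dots> = \<theta> + ast * C - \<epsilon> / 2 * C" unfolding a(3) by (simp add: algebra_simps)
    also have "\<dots> \<le> 1 - \<epsilon> / 2"
    proof -
      have "\<epsilon> / 2 * 1 \<le> \<epsilon> / 2 * C" using C eps by (intro mult_left_mono) auto
      thus ?thesis using C by linarith
    qed
    finally show ?thesis .
  qed
  have e1: "\<eta> * (1 + a) \<le> \<epsilon> / 16"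
  proof -
    have "\<eta> * (1 + a) \<le> \<eta> * 2" using a eta eps by (intro mult_left_mono) auto
    moreover have "\<eta> * 2 = \<epsilon> / 16" using eta by simp
    ultimately show ?thesis by linarith
  qed
  have e2: "3 * (1 + a) / Y \<le> 6 / Y" using a Ypos by (simp add: divide_right_mono)
  have e3: "a * (1 / real (P - 1)) \<le> 1 / real (P - 1)"
    using mult_left_le_one_le[of "1 / real (P - 1)" a] a(1,2) by simp
  have e4: "(1 + a) / X \<le> 2 / X" using a X by (simp add: divide_right_mono)
  have eqr: "(\<theta> + \<eta>) * (1 + a) + 3 * (1 + a) / Y + \<beta> / X + a * ln (1 / (2 * \<theta>))
       + a * (1 + 1 / real (P - 1)) + E / X = (\<theta> * (1 + a) + a * ln (1 / (2 * \<theta>)) + a) + \<eta> * (1 + a) + a * (1 / real (P - 1))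
     + 3 * (1 + a) / Y + \<beta> / X + E / X" by (simp add: algebra_simps)
  have div2: "1 \<le> (\<theta> * (1 + a) + a * ln (1 / (2 * \<theta>)) + a) + \<eta> * (1 + a) + a * (1 / real (P - 1))
     + 3 * (1 + a) / Y + \<beta> / X + E / X" using div unfolding eqr .
  have "2 * \<beta> / X = \<beta> / X + \<beta> / X" by simp
  moreover have "1 / real (P - 1) + 6 / Y + 2 / X + 2 * \<beta> / X < \<epsilon> / 32"
    using small by (simp only: ac_simps)
  ultimately show False using lin_helper[OF div2 EX DX core e1 e3 e2 e4] eps by blast
qed


lemma comp_at_end:
  assumes "competitive_on A r \<beta> n" "valid_input \<sigma>" "input_size_le \<sigma> n"
  shows "feasible_packing (items_after \<sigma>) (A \<sigma>) \<and>
         real (bins_used (items_after \<sigma>) (A \<sigma>)) \<le> r * real (OPT (items_after \<sigma>)) + \<beta>"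
  using assms unfolding competitive_on_def by (metis order_refl take_all)

lemma items_after_round:
  assumes "items_after p = S0 M s"
  shows "items_after (p @ insl M x m) = Sb M s m x"
  unfolding items_after_insl assms by (auto simp: S0_def Sb_def fun_eq_iff)

lemma round_exists:
  fixes A :: algorithm and a \<epsilon> \<beta> r :: real and K L P h j0 n M :: nat
  assumes comp: "competitive_on A r \<beta> n" and r: "r = 1 + a"
    and a: "a = astar - \<epsilon> / 2" "0 \<le> a" "a \<le> 1" and eps: "0 < \<epsilon>" and b0: "0 \<le> \<beta>"
    and K: "1 \<le> K" and L: "L = 2 * P" "2 \<le> P" and M: "M = K * L" and n: "M + 4 * K \<le> n"
    and j0: "real j0 \<le> theta * real L + 2" "theta * real L \<le> real j0 - 1" "2 \<le> j0"
    and h: "\<epsilon> / 32 * real L \<le> real h" "real h \<le> \<epsilon> / 32 * real L + 1" "j0 + h \<le> P"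
    and small: "6 / real L + 1 / real (P - 1) + 2 / real K + 2 * \<beta> / real K < \<epsilon> / 32"
    and p: "valid_input p" "input_size_le p n" "items_after p = S0 M (1 / real L)"
  shows "\<exists>j\<in>{j0..<P}. \<epsilon>^2 / 1024 * real M <
          real (card {i. i < M \<and> A p i \<noteq> A (p @ insl M (1 - real j / real L) (M div j)) i})"
proof (rule ccontr)
  assume "\<not> ?thesis"
  hence Dle: "real (card {i. i < M \<and> A p i \<noteq> A (p @ insl M (1 - real j / real L) (M div j)) i}) \<le> \<epsilon>^2 / 1024 * real M"
    if "j \<in> {j0..<P}" for j using that by force
  have AF: "1/3 \<le> astar" "astar \<le> 1/2" "1/4 \<le> theta" "theta \<le> 1/3"
     "theta + astar * (theta + ln (1 / (2*theta)) + 1) \<le> 1" "0 \<le> ln (1 / (2*theta))"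
    using astar_facts by auto
  have Lpos: "0 < L" using L by simp
  define f0 where "f0 = A p"
  define s where "s = 1 / real L"
  have s0: "0 < s" using Lpos by (simp add: s_def)
  have c0: "feasible_packing (S0 M s) f0 \<and> real (bins_used (S0 M s) f0) \<le> r * real (OPT (S0 M s)) + \<beta>"
    using comp_at_end[OF comp p(1,2)] p(3) by (simp add: f0_def s_def)
  have OPT0: "OPT (S0 M s) \<le> K" using OPT_S0[OF Lpos, of K] by (simp add: M s_def)
  define Bv where "Bv = real (bins_used (S0 M s) f0)"
  have Bv: "Bv \<le> (1 + a) * real K + \<beta>"
  proof -
    have "r * real (OPT (S0 M s)) \<le> r * real K" using OPT0 r a by (intro mult_left_mono) auto
    thus ?thesis using c0 r by (simp add: Bv_def)
  qed
  define c where "c b = card {i. i < M \<and> f0 i = b}" for b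
  define N where "N x = real (card {b\<in>f0 ` {..<M}. x < c b})" for x
  have cL: "c b \<le> L" for b
  proof -
    have "real (c b) * s \<le> 1" using small_fiber_bound[OF conjunct1[OF c0] s0] by (simp add: c_def)
    hence "real (c b) \<le> real L" using Lpos by (simp add: s_def field_simps)
    thus ?thesis by simp
  qed
  have sumN: "real M = (\<Sum>x<L. N x)"
    using layer_cake[of M f0 L] cL unfolding N_def c_def by (simp flip: of_nat_sum)
  have anti: "N y \<le> N x" if "x \<le> y" for x y
    unfolding N_def using that by (intro of_nat_mono card_mono) auto
  have NB: "N x \<le> Bv" for x
    unfolding N_def Bv_def bins_used_def dom_S0 by (intro of_nat_mono card_mono) auto
  define X where "X = real K"
  define Y where "Y = real L"
  have MXY: "real M = X * Y" by (simp add: M X_def Y_def)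
  define D where "D = \<epsilon>^2 / 1024 * (X * Y)"
  define E where "E = (1 + a) + \<beta> + D / real h"
  have h0: "0 < real h" using h eps Lpos
    by (smt (verit, best) divide_pos_pos mult_pos_pos of_nat_0_less_iff)
  have Nb: "N (j + h) \<le> a * (X * Y) / real j + E" if j: "j0 \<le> j" "j < P" for j
  proof -
    define x where "x = 1 - real j / real L"
    define m where "m = M div j"
    define f1 where "f1 = A (p @ insl M x m)"
    have jpos: "0 < j" using j j0 by simp
    have jL: "2 * j < L" using j L by simp
    have x01: "0 \<le> x" "x \<le> 1" using jL Lpos by (auto simp: x_def field_simps)
    have j4: "L \<le> 4 * j"
    proof -
      have "real L / 4 \<le> theta * real L" using AF Lpos by (simp add: field_simps)
      also have "\<dots> \<le> real j" using j0 j by linarith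
      finally show ?thesis by simp
    qed
    have m4: "m \<le> 4 * K"
    proof -
      have "m * j \<le> M" by (simp add: m_def)
      also have "M \<le> K * (4 * j)" using j4 M by simp
      finally have "m * j \<le> (4 * K) * j" by (simp add: algebra_simps)
      thus ?thesis using jpos by simp
    qed
    have vj: "valid_input (p @ insl M x m)"
      by (rule valid_insl[OF p(1) _ x01]) (simp add: p(3) S0_def)
    have sj: "input_size_le (p @ insl M x m) n"
    proof (rule size_insl[OF p(2)])
      have "dom (items_after p) \<union> {M..<M+m} = {..<M+m}" by (auto simp: p(3) dom_S0)
      thus "card (dom (items_after p) \<union> {M..<M + m}) \<le> n" using m4 n by simp
    qed
    have iaj: "items_after (p @ insl M x m) = Sb M s m x"
      by (rule items_after_round) (simp add: p(3) s_def)
    have c1: "feasible_packing (Sb M s m x) f1 \<and> real (bins_used (Sb M s m x) f1) \<le> r * real (OPT (Sb M s m x)) + \<beta>"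
      using comp_at_end[OF comp vj sj] iaj by (simp add: f1_def)
    have OPT1: "OPT (Sb M s m x) \<le> m + 1"
      unfolding m_def by (rule OPT_Sb[OF jpos]) (use s0 x01 Lpos in \<open>auto simp: s_def x_def field_simps\<close>)
    define G where "G = card {b. j < card {i. i < M \<and> f0 i = b \<and> f1 i = b}}"
    have BL: "m + G \<le> bins_used (Sb M s m x) f1"
      unfolding G_def
      by (rule big_lower[OF conjunct1[OF c1] s0]) (use jL Lpos in \<open>auto simp: x_def s_def field_simps\<close>)
    have "real m + real G \<le> r * real (OPT (Sb M s m x)) + \<beta>" using BL c1
      by (metis (mono_tags, opaque_lifting) of_nat_add of_nat_le_iff order_trans linorder_not_le less_le_trans)
    also have "r * real (OPT (Sb M s m x)) \<le> r * (real m + 1)" using OPT1 r a by (intro mult_left_mono) auto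
    finally have G1: "real G \<le> a * real m + (1 + a) + \<beta>" using r by (simp add: algebra_simps)
    have "real m \<le> real M / real j"
      unfolding m_def by (rule of_nat_div_le_of_nat)
    hence "a * real m \<le> a * (real M / real j)" using a by (intro mult_left_mono) auto
    hence G2: "real G \<le> a * (X * Y) / real j + (1 + a) + \<beta>" using G1 MXY by simp
    have Dj: "real (card {i. i < M \<and> f0 i \<noteq> f1 i}) \<le> D"
      using Dle[of j] j MXY by (simp add: f0_def f1_def x_def m_def D_def)
    have "N (j + h) \<le> real G + real (card {i. i < M \<and> f0 i \<noteq> f1 i}) / real h"
      using moved_bound[of h f0 M j f1] h0 unfolding N_def c_def G_def by (simp add: add.commute)
    also have "\<dots> \<le> real G + D / real h" using Dj h0 by (simp add: divide_right_mono)
    finally show ?thesis using G2 by (simp add: E_def)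
  qed
  have main: "X * Y \<le> real (j0 + h) * Bv + (\<Sum>j\<in>{j0..<P}. a * (X * Y) / real j + E)
              + real (L - (P + h)) * (a * (X * Y) / real (P - 1) + E)"
  proof -
    have sumN': "X * Y = (\<Sum>x<L. N x)" using sumN MXY by simp
    show ?thesis by (rule layer_ineq[OF sumN' anti NB Nb]) (use h h0 j0 L in auto)
  qed
  have H: "(\<Sum>j\<in>{j0..<P}. 1 / real j) \<le> ln (1 / (2 * theta))"
  proof -
    have "(\<Sum>j\<in>{j0..<P}. 1 / real j) \<le> ln (real P - 1) - ln (real j0 - 1)"
      by (rule harm_bound) (use j0 h in auto)
    also have "\<dots> = ln ((real P - 1) / (real j0 - 1))" using j0 L by (simp add: ln_div)
    also have "\<dots> \<le> ln (real P / (theta * real L))"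
    proof (rule ln_mono)
      have tl: "0 < theta * real L" using AF Lpos by simp
      show "0 < (real P - 1) / (real j0 - 1)" using j0 L by simp
      show "(real P - 1) / (real j0 - 1) \<le> real P / (theta * real L)"
        using tl j0 L by (intro frac_le) auto
    qed
    also have "real P / (theta * real L) = 1 / (2 * theta)" using L AF by (simp add: field_simps)
    finally show ?thesis .
  qed
  have Yd: "Y = real L" by (simp add: Y_def)
  have X1: "1 \<le> X" using K by (simp add: X_def)
  have Bv': "Bv \<le> (1 + a) * X + \<beta>" using Bv by (simp add: X_def)
  have j0': "real j0 \<le> theta * Y + 2" using j0 by (simp add: Y_def)
  have h1: "\<epsilon> / 32 * Y \<le> real h" "real h \<le> \<epsilon> / 32 * Y + 1" using h by (simp_all add: Y_def)
  have D1: "D \<le> \<epsilon>^2 / 1024 * (X * Y)" "0 \<le> D" by (simp_all add: D_def X_def Y_def)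
  have small': "6 / Y + 1 / real (P - 1) + 2 / X + 2 * \<beta> / X < \<epsilon> / 32" using small by (simp add: X_def Y_def)
  have C1: "1 \<le> theta + ln (1 / (2 * theta)) + 1" "theta + astar * (theta + ln (1 / (2 * theta)) + 1) \<le> 1"
     "0 \<le> theta" using AF by auto
  show False
    by (rule numeric_contra[OF main Yd L(1) X1 h(3) j0(3) Bv' b0 a(2,3,1) E_def H j0' h1 refl refl D1 small' refl C1 eps])
qed


lemma round_moves:
  assumes "items_after p = S0 M s"
  shows "card {i. i < M \<and> A p i \<noteq> A (p @ insl M x m) i}
         \<le> (\<Sum>t<length (insl M x m @ dell M m). moves_at A (p @ (insl M x m @ dell M m)) (length p + t))"
proof -
  define q where "q = p @ (insl M x m @ dell M m)"
  have tk: "take (length p + t) q = p @ take t (insl M x m)" if "t \<le> m" for t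
    using that by (simp add: q_def)
  have sub: "{..<M} \<subseteq> dom (items_after (take t q))" if "length p \<le> t" "t \<le> length p + m" for t
  proof -
    define t' where "t' = t - length p"
    have t': "t = length p + t'" "t' \<le> m" using that by (simp_all add: t'_def)
    show ?thesis unfolding t' tk[OF t'(2)] take_insl[OF t'(2)] items_after_insl assms by (auto simp: S0_def)
  qed
  have "card {i\<in>{..<M}. A (take (length p) q) i \<noteq> A (take (length p + m) q) i} \<le> (\<Sum>t\<in>{length p..<length p + m}. moves_at A q t)"
    by (rule moves_lower) (use sub in \<open>auto simp: q_def\<close>)
  moreover have "take (length p) q = p" by (simp add: q_def)
  moreover have "take (length p + m) q = p @ insl M x m" using tk[of m] by (simp add: take_insl)
  moreover have "{i\<in>{..<M}. A p i \<noteq> A (p @ insl M x m) i} = {i. i < M \<and> A p i \<noteq> A (p @ insl M x m) i}" by auto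
  moreover have "(\<Sum>t\<in>{length p..<length p + m}. moves_at A q t) = (\<Sum>t<m. moves_at A q (length p + t))"
  proof -
    have "(\<Sum>t\<in>{length p..<length p + m}. moves_at A q t) = (\<Sum>t\<in>{0 + length p..<m + length p}. moves_at A q t)"
      by (simp add: add.commute)
    also have "\<dots> = (\<Sum>t\<in>{0..<m}. moves_at A q (t + length p))" by (rule sum.shift_bounds_nat_ivl)
    finally show ?thesis by (simp add: atLeast0LessThan add.commute)
  qed
  moreover have "(\<Sum>t<m. moves_at A q (length p + t)) \<le> (\<Sum>t<length (insl M x m @ dell M m). moves_at A q (length p + t))"
    by (rule sum_mono2) auto
  ultimately show ?thesis by (simp add: q_def)
qed

lemma round_step:
  fixes A :: algorithm and a \<epsilon> \<beta> r :: real and K L P h j0 n M :: nat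
  assumes comp: "competitive_on A r \<beta> n" and r: "r = 1 + a"
    and a: "a = astar - \<epsilon> / 2" "0 \<le> a" "a \<le> 1" and eps: "0 < \<epsilon>" and b0: "0 \<le> \<beta>"
    and K: "1 \<le> K" and L: "L = 2 * P" "2 \<le> P" and M: "M = K * L" and n: "M + 4 * K \<le> n"
    and j0: "real j0 \<le> theta * real L + 2" "theta * real L \<le> real j0 - 1" "2 \<le> j0"
    and h: "\<epsilon> / 32 * real L \<le> real h" "real h \<le> \<epsilon> / 32 * real L + 1" "j0 + h \<le> P"
    and small: "6 / real L + 1 / real (P - 1) + 2 / real K + 2 * \<beta> / real K < \<epsilon> / 32"
    and p: "valid_input p" "input_size_le p n" "items_after p = S0 M (1 / real L)"
  shows "\<exists>q. valid_input q \<and> input_size_le q n \<and> items_after q = S0 M (1 / real L) \<and>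
           real (total_moves A p) + \<epsilon>^2 / 1024 * real M \<le> real (total_moves A q) \<and>
           length q \<le> length p + 8 * K"
proof -
  obtain j where j: "j \<in> {j0..<P}" and Dj: "\<epsilon>^2 / 1024 * real M <
          real (card {i. i < M \<and> A p i \<noteq> A (p @ insl M (1 - real j / real L) (M div j)) i})"
    using round_exists[OF assms] by blast
  define x where "x = 1 - real j / real L"
  define m where "m = M div j"
  have Lpos: "0 < L" using L by simp
  have jpos: "0 < j" using j j0 by simp
  have jL: "2 * j < L" using j L by simp
  have x01: "0 \<le> x" "x \<le> 1" using jL Lpos by (auto simp: x_def field_simps)
  have AF: "1/4 \<le> theta" using astar_facts by auto
  have j4: "L \<le> 4 * j"
  proof -
    have "real L / 4 \<le> theta * real L" using AF Lpos by (simp add: field_simps)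
    also have "\<dots> \<le> real j" using j0 j by auto
    finally show ?thesis by simp
  qed
  have m4: "m \<le> 4 * K"
  proof -
    have "m * j \<le> M" by (simp add: m_def)
    also have "M \<le> K * (4 * j)" using j4 M by simp
    finally have "m * j \<le> (4 * K) * j" by (simp add: algebra_simps)
    thus ?thesis using jpos by simp
  qed
  define q where "q = p @ (insl M x m @ dell M m)"
  have v1: "valid_input (p @ insl M x m)"
    by (rule valid_insl[OF p(1) _ x01]) (simp add: p(3) S0_def)
  have vq: "valid_input q" unfolding q_def append_assoc[symmetric]
    by (rule valid_dell[OF v1]) (simp add: items_after_insl)
  have s1: "input_size_le (p @ insl M x m) n"
  proof (rule size_insl[OF p(2)])
    have "dom (items_after p) \<union> {M..<M+m} = {..<M+m}" by (auto simp: p(3) dom_S0)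
    thus "card (dom (items_after p) \<union> {M..<M + m}) \<le> n" using m4 n by simp
  qed
  have sq: "input_size_le q n" unfolding q_def append_assoc[symmetric] by (rule size_dell[OF s1])
  have iq: "items_after q = S0 M (1 / real L)"
    unfolding q_def append_assoc[symmetric] items_after_dell items_after_insl p(3)
    by (auto simp: S0_def fun_eq_iff)
  have tm: "total_moves A q = total_moves A p + (\<Sum>t<length (insl M x m @ dell M m). moves_at A q (length p + t))"
    unfolding q_def by (rule total_moves_append)
  have rm: "card {i. i < M \<and> A p i \<noteq> A (p @ insl M x m) i} \<le> (\<Sum>t<length (insl M x m @ dell M m). moves_at A q (length p + t))"
    unfolding q_def by (rule round_moves[OF p(3)])
  have "\<epsilon>^2 / 1024 * real M < real (card {i. i < M \<and> A p i \<noteq> A (p @ insl M x m) i})"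
    using Dj by (simp add: x_def m_def)
  also have "\<dots> \<le> real (\<Sum>t<length (insl M x m @ dell M m). moves_at A q (length p + t))"
    using rm by linarith
  finally have "real (total_moves A p) + \<epsilon>^2 / 1024 * real M \<le> real (total_moves A q)"
    using tm by simp
  moreover have "length q \<le> length p + 8 * K" using m4 by (simp add: q_def)
  ultimately show ?thesis using vq sq iq by blast
qed

lemma init_seq:
  assumes "M \<le> n" "0 < L"
  shows "valid_input (insl 0 (1 / real L) M) \<and> input_size_le (insl 0 (1 / real L) M) n \<and>
         items_after (insl 0 (1 / real L) M) = S0 M (1 / real L)"
proof -
  have v: "valid_input ([] @ insl 0 (1 / real L) M)"
    by (rule valid_insl[OF valid_Nil]) (use assms in \<open>auto simp: items_after_Nil\<close>)
  have s: "input_size_le ([] @ insl 0 (1 / real L) M) n"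
    by (rule size_insl[OF size_Nil]) (use assms in \<open>auto simp: items_after_Nil\<close>)
  have i: "items_after ([] @ insl 0 (1 / real L) M) = S0 M (1 / real L)"
    unfolding items_after_insl by (auto simp: S0_def items_after_Nil fun_eq_iff)
  show ?thesis using v s i by simp
qed

lemma iterate_rounds:
  fixes A :: algorithm and a \<epsilon> \<beta> r :: real and K L P h j0 n M :: nat
  assumes comp: "competitive_on A r \<beta> n" and r: "r = 1 + a"
    and a: "a = astar - \<epsilon> / 2" "0 \<le> a" "a \<le> 1" and eps: "0 < \<epsilon>" and b0: "0 \<le> \<beta>"
    and K: "1 \<le> K" and L: "L = 2 * P" "2 \<le> P" and M: "M = K * L" and n: "M + 4 * K \<le> n"
    and j0: "real j0 \<le> theta * real L + 2" "theta * real L \<le> real j0 - 1" "2 \<le> j0"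
    and h: "\<epsilon> / 32 * real L \<le> real h" "real h \<le> \<epsilon> / 32 * real L + 1" "j0 + h \<le> P"
    and small: "6 / real L + 1 / real (P - 1) + 2 / real K + 2 * \<beta> / real K < \<epsilon> / 32"
  shows "\<exists>q. valid_input q \<and> input_size_le q n \<and> items_after q = S0 M (1 / real L) \<and>
           real k * (\<epsilon>^2 / 1024 * real M) \<le> real (total_moves A q) \<and>
           length q \<le> M + k * (8 * K)"
proof (induction k)
  case 0
  have "M \<le> n" using n by simp
  from init_seq[OF this, of L] L show ?case by (intro exI[of _ "insl 0 (1 / real L) M"]) auto
next
  case (Suc k)
  then obtain p where p: "valid_input p" "input_size_le p n" "items_after p = S0 M (1 / real L)"
     "real k * (\<epsilon>^2 / 1024 * real M) \<le> real (total_moves A p)" "length p \<le> M + k * (8 * K)" by blast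
  obtain q where q: "valid_input q" "input_size_le q n" "items_after q = S0 M (1 / real L)"
           "real (total_moves A p) + \<epsilon>^2 / 1024 * real M \<le> real (total_moves A q)"
           "length q \<le> length p + 8 * K"
    using round_step[OF comp r a eps b0 K L M n j0 h small p(1,2,3)] by blast
  have "real (Suc k) * (\<epsilon>^2 / 1024 * real M) \<le> real (total_moves A q)"
    using p(4) q(4) by (simp add: algebra_simps)
  moreover have "length q \<le> M + Suc k * (8 * K)" using p(5) q(5) by simp
  ultimately show ?case using q by blast
qed


lemma comp_mono:
  assumes "competitive_on A r \<beta> n" "r \<le> r'"
  shows "competitive_on A r' \<beta> n"
  unfolding competitive_on_def
proof (intro allI impI)
  fix \<sigma> t assume h: "valid_input \<sigma> \<and> input_size_le \<sigma> n" "t \<le> length \<sigma>"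
  have "feasible_packing (items_after (take t \<sigma>)) (A (take t \<sigma>)) \<and>
        real (bins_used (items_after (take t \<sigma>)) (A (take t \<sigma>))) \<le> r * real (OPT (items_after (take t \<sigma>))) + \<beta>"
    using assms(1) h unfolding competitive_on_def by blast
  moreover have "r * real (OPT (items_after (take t \<sigma>))) \<le> r' * real (OPT (items_after (take t \<sigma>)))"
    using assms(2) by (intro mult_right_mono) auto
  ultimately show "feasible_packing (items_after (take t \<sigma>)) (A (take t \<sigma>)) \<and>
        real (bins_used (items_after (take t \<sigma>)) (A (take t \<sigma>))) \<le> r' * real (OPT (items_after (take t \<sigma>))) + \<beta>"
    by linarith
qed

lemma OPT_empty: "OPT Map.empty = 0"
proof -
  have "feasible_packing Map.empty (\<lambda>_. 0)" by (simp add: feasible_packing_def load_def)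
  from OPT_le[OF this, of "{}"] show ?thesis by simp
qed

lemma beta_nonneg:
  assumes "competitive_on A r \<beta> n"
  shows "0 \<le> \<beta>"
proof -
  have "feasible_packing (items_after []) (A []) \<and>
        real (bins_used (items_after []) (A [])) \<le> r * real (OPT (items_after [])) + \<beta>"
    by (rule comp_at_end[OF assms valid_Nil size_Nil])
  thus ?thesis by (simp add: items_after_Nil OPT_empty bins_used_def)
qed

lemma bins_ge_K:
  assumes "feasible_packing (S0 (K * L) (1 / real L)) f0" "0 < L"
  shows "K \<le> bins_used (S0 (K * L) (1 / real L)) f0"
proof -
  define M where "M = K * L"
  define c where "c b = card {i. i < M \<and> f0 i = b}" for b
  have cL: "c b \<le> L" for b
  proof -
    have "real (c b) * (1 / real L) \<le> 1"
      using small_fiber_bound[OF assms(1)[folded M_def]] assms(2) by (simp add: c_def)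
    hence "real (c b) \<le> real L" using assms(2) by (simp add: field_simps)
    thus ?thesis by simp
  qed
  have "M = (\<Sum>x<L. card {b\<in>f0 ` {..<M}. x < c b})"
    using layer_cake[of M f0 L] cL unfolding c_def by simp
  also have "\<dots> \<le> (\<Sum>x<L. card (f0 ` {..<M}))"
    by (intro sum_mono card_mono) auto
  also have "\<dots> = L * bins_used (S0 M (1 / real L)) f0" by (simp add: bins_used_def dom_S0)
  finally have "K * L \<le> bins_used (S0 M (1 / real L)) f0 * L" by (simp add: M_def mult.commute)
  thus ?thesis using assms(2) by (simp add: M_def)
qed

lemma vacuous_case:
  assumes comp: "competitive_on A r \<beta> n" and r: "r \<le> 1 - astar" and K: "0 < K" "0 < L" "K * L \<le> n"
    and b: "\<beta> < astar * real K"
  shows False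
proof -
  define M where "M = K * L"
  have ini: "valid_input (insl 0 (1 / real L) M) \<and> input_size_le (insl 0 (1 / real L) M) n \<and>
         items_after (insl 0 (1 / real L) M) = S0 M (1 / real L)"
    by (rule init_seq) (use K in \<open>auto simp: M_def\<close>)
  define f0 where "f0 = A (insl 0 (1 / real L) M)"
  have c: "feasible_packing (S0 M (1 / real L)) f0 \<and>
      real (bins_used (S0 M (1 / real L)) f0) \<le> r * real (OPT (S0 M (1 / real L))) + \<beta>"
    using comp_at_end[OF comp conjunct1[OF ini] conjunct1[OF conjunct2[OF ini]]] ini by (simp add: f0_def)
  have B: "K \<le> bins_used (S0 M (1 / real L)) f0" using bins_ge_K[of K L f0] c K by (simp add: M_def)
  have O: "OPT (S0 M (1 / real L)) \<le> K" using OPT_S0[OF K(2), of K] by (simp add: M_def)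
  have AF: "1/3 \<le> astar" "astar \<le> 1/2" using astar_facts by auto
  have "r * real (OPT (S0 M (1 / real L))) \<le> (1 - astar) * real K"
  proof (cases "r \<le> 0")
    case True
    hence "r * real (OPT (S0 M (1 / real L))) \<le> 0" by (simp add: mult_nonpos_nonneg)
    also have "0 \<le> (1 - astar) * real K" using AF by simp
    finally show ?thesis .
  next
    case False
    hence "r * real (OPT (S0 M (1 / real L))) \<le> r * real K" using O by (intro mult_left_mono) auto
    also have "\<dots> \<le> (1 - astar) * real K" using r by (intro mult_right_mono) auto
    finally show ?thesis .
  qed
  hence "real K \<le> (1 - astar) * real K + \<beta>" using c B by linarith
  thus False using b by (simp add: algebra_simps)
qed


lemma nat_floor_bounds: "0 \<le> x \<Longrightarrow> real (nat \<lfloor>x\<rfloor>) \<le> x \<and> x - 1 < real (nat \<lfloor>x\<rfloor>)"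
  using floor_correct[of x] by (auto simp: of_nat_nat)

lemma nat_ceil_bounds: "0 \<le> x \<Longrightarrow> x \<le> real (nat \<lceil>x\<rceil>) \<and> real (nat \<lceil>x\<rceil>) < x + 1"
  using ceiling_correct[of x] by (auto simp: of_nat_nat)

lemma lin2:
  fixes x1 x2 x3 x4 y1 y2 y3 y4 z e :: real
  assumes "x1 \<le> y1" "x2 \<le> y2" "x3 \<le> y3" "x4 \<le> y4" "y1 + y2 = z" "z < e / 128" "y3 < e / 128" "y4 < e / 64"
  shows "x1 + x2 + x3 + x4 < e / 32"
  using assms by linarith

lemma main_for_n:
  fixes \<epsilon> \<delta> b :: real and n :: nat and A :: algorithm
  assumes d: "0 < \<delta>" "\<delta> < 1/2" and e: "0 < \<epsilon>" "\<epsilon> < 2 * astar" and n1: "1 \<le> n"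
    and u: "16 + 4096 / \<epsilon> \<le> real n powr \<delta>" and v: "384 + 20480 / \<epsilon> \<le> real n powr (1 - \<delta>)"
    and b: "b < \<epsilon> * real n powr \<delta> / 2048"
    and comp0: "competitive_on A (alpha_lb - \<epsilon>) b n"
  shows "\<exists>\<sigma>. valid_input \<sigma> \<and> input_size_le \<sigma> n \<and> length \<sigma> > 0 \<and>
           1 / 147456 * \<epsilon>^2 * real n powr (1 - \<delta>) * real (length \<sigma>) \<le> real (total_moves A \<sigma>)"
proof -
  define U where "U = real n powr \<delta>"
  define V where "V = real n powr (1 - \<delta>)"
  have AF: "1/3 \<le> astar" "astar \<le> 1/2" "1/4 \<le> theta" "theta \<le> 1/3" using astar_facts by auto
  have UV: "U * V = real n" using n1 by (simp add: U_def V_def flip: powr_add)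
  have Un: "U \<le> real n" unfolding U_def using n1 d by (intro order_trans[OF powr_mono[of \<delta> 1]]) auto
  have e4: "4096 / \<epsilon> > 0" "20480 / \<epsilon> > 0" using e by auto
  have U16: "16 \<le> U" using u e4(1) unfolding U_def by linarith
  have V384: "384 \<le> V" using v e4(2) unfolding V_def by linarith
  define K where "K = nat \<lfloor>U / 8\<rfloor>"
  define P where "P = nat \<lfloor>V / 16\<rfloor>"
  define L where "L = 2 * P"
  define M where "M = K * L"
  have Kb: "real K \<le> U / 8" "U / 8 - 1 < real K" using nat_floor_bounds[of "U/8"] U16 by (auto simp: K_def)
  have Pb: "real P \<le> V / 16" "V / 16 - 1 < real P" using nat_floor_bounds[of "V/16"] V384 by (auto simp: P_def)
  have KU: "U / 16 \<le> real K" using Kb U16 by linarith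
  have K1: "1 \<le> K" using KU U16 by simp
  have PV: "V / 32 \<le> real P" using Pb V384 by linarith
  have P12: "12 \<le> P" using PV V384 by simp
  have LV: "V / 16 \<le> real L" using PV by (simp add: L_def)
  have Lpos: "0 < L" using P12 by (simp add: L_def)
  have b0: "0 \<le> b" by (rule beta_nonneg[OF comp0])
  define a where "a = astar - \<epsilon> / 2"
  have a: "0 \<le> a" "a \<le> 1" using e AF by (auto simp: a_def)
  have comp: "competitive_on A (1 + a) b n"
    by (rule comp_mono[OF comp0]) (simp add: a_def astar_def e)
  have nM: "M + 4 * K \<le> n"
  proof -
    have "real M = real K * (2 * real P)" by (simp add: M_def L_def)
    also have "\<dots> \<le> (U / 8) * (2 * (V / 16))"
      using Kb Pb by (intro mult_mono) auto
    also have "\<dots> = real n / 64" using UV by simp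
    finally have "real M \<le> real n / 64" .
    moreover have "4 * real K \<le> real n / 2" using Kb Un by simp
    ultimately have "real (M + 4 * K) \<le> real n" using n1 by simp
    thus ?thesis by linarith
  qed
  define h where "h = nat \<lceil>\<epsilon> / 32 * real L\<rceil>"
  define j0 where "j0 = nat \<lfloor>theta * real L\<rfloor> + 2"
  have hb: "\<epsilon> / 32 * real L \<le> real h" "real h \<le> \<epsilon> / 32 * real L + 1"
    using nat_ceil_bounds[of "\<epsilon> / 32 * real L"] e by (auto simp: h_def)
  have j0b: "real j0 \<le> theta * real L + 2" "theta * real L \<le> real j0 - 1" "2 \<le> j0"
  proof -
    have tl: "0 \<le> theta * real L" using AF by simp
    have "real j0 = real (nat \<lfloor>theta * real L\<rfloor>) + 2" by (simp add: j0_def)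
    thus "real j0 \<le> theta * real L + 2" "theta * real L \<le> real j0 - 1" "2 \<le> j0"
      using nat_floor_bounds[OF tl] \<open>real j0 = _\<close> by (linarith, linarith, simp add: j0_def)
  qed
  have jhP: "j0 + h \<le> P"
  proof -
    have "\<epsilon> / 32 * real L \<le> 1 / 32 * real L" using e AF by (intro mult_right_mono) auto
    moreover have "theta * real L \<le> 1/3 * real L" using AF by (intro mult_right_mono) auto
    moreover have "24 \<le> real L" using P12 by (simp add: L_def)
    moreover have "real L = 2 * real P" by (simp add: L_def)
    ultimately have "real j0 + real h \<le> real P" using hb(2) j0b(1) by linarith
    thus ?thesis by linarith
  qed
  have small: "6 / real L + 1 / real (P - 1) + 2 / real K + 2 * b / real K < \<epsilon> / 32"
  proof -
    have Vp: "0 < V" using V384 by simp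
    have Up: "0 < U" using U16 by simp
    have t1: "6 / real L \<le> 96 / V"
    proof -
      have "6 / real L \<le> 6 / (V / 16)" using LV Vp by (intro divide_left_mono) auto
      thus ?thesis by simp
    qed
    have t2: "1 / real (P - 1) \<le> 64 / V"
    proof -
      have "V / 64 \<le> real (P - 1)" using PV P12 by (simp add: of_nat_diff)
      hence "1 / real (P - 1) \<le> 1 / (V / 64)" using Vp by (intro divide_left_mono) auto
      thus ?thesis by simp
    qed
    have t3: "2 / real K \<le> 32 / U"
    proof -
      have "2 / real K \<le> 2 / (U / 16)" using KU Up by (intro divide_left_mono) auto
      thus ?thesis by simp
    qed
    have t4: "2 * b / real K \<le> 32 * b / U"
    proof -
      have "2 * b / real K \<le> 2 * b / (U / 16)" using KU Up b0 by (intro divide_left_mono) auto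
      thus ?thesis by simp
    qed
    have s1: "160 / V < \<epsilon> / 128"
    proof -
      have "20480 / \<epsilon> < V" using V384 v by (simp add: V_def)
      hence "20480 < V * \<epsilon>" using e by (simp add: divide_less_eq)
      thus ?thesis using Vp by (simp add: divide_less_eq field_simps)
    qed
    have s2: "32 / U < \<epsilon> / 128"
    proof -
      have "4096 / \<epsilon> < U" using U16 u by (simp add: U_def)
      hence "4096 < U * \<epsilon>" using e by (simp add: divide_less_eq)
      thus ?thesis using Up by (simp add: divide_less_eq field_simps)
    qed
    have s3: "32 * b / U < \<epsilon> / 64"
    proof -
      have "b < \<epsilon> * U / 2048" using b by (simp add: U_def)
      thus ?thesis using Up by (simp add: divide_less_eq field_simps)
    qed
    have "96 / V + 64 / V = 160 / V" by simp
    from lin2[OF t1 t2 t3 t4 this s1 s2 s3] show ?thesis .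
  qed
  obtain q where q: "valid_input q" "input_size_le q n" "items_after q = S0 M (1 / real L)"
     "real L * (\<epsilon>^2 / 1024 * real M) \<le> real (total_moves A q)" "length q \<le> M + L * (8 * K)"
    using iterate_rounds[OF comp refl a_def a(1,2) e(1) b0 K1 L_def _ M_def nM j0b hb jhP small, of L] P12
    by auto
  have Mpos: "0 < M" using K1 Lpos by (simp add: M_def)
  have lenq: "real (length q) \<le> 9 * real M"
  proof -
    have "length q \<le> 9 * M" using q(5) by (simp add: M_def algebra_simps)
    thus ?thesis by linarith
  qed
  have "1 / 147456 * \<epsilon>^2 * V * real (length q) \<le> 1 / 147456 * \<epsilon>^2 * V * (9 * real M)"
    using lenq V384 by (intro mult_left_mono) auto
  also have "\<dots> = (V / 16) * (\<epsilon>^2 / 1024 * real M)" by simp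
  also have "\<dots> \<le> real L * (\<epsilon>^2 / 1024 * real M)" using LV by (intro mult_right_mono) auto
  also have "\<dots> \<le> real (total_moves A q)" by (rule q(4))
  finally have fin: "1 / 147456 * \<epsilon>^2 * V * real (length q) \<le> real (total_moves A q)" .
  have "0 < real L * (\<epsilon>^2 / 1024 * real M)" using Lpos Mpos e by simp
  hence "0 < total_moves A q" using q(4) by linarith
  hence "q \<noteq> []" by (auto simp: total_moves_def)
  thus ?thesis using q fin by (auto simp: V_def)
qed


lemma powr_ev:
  assumes "0 < (d::real)"
  shows "\<exists>N. \<forall>n\<ge>N. T \<le> real n powr d"
proof -
  define T' where "T' = max T 1"
  define N where "N = nat \<lceil>T' powr (1 / d)\<rceil>"
  have "T \<le> real n powr d" if "n \<ge> N" for n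
  proof -
    have "T' powr (1 / d) \<le> real n" using that unfolding N_def by linarith
    hence "(T' powr (1 / d)) powr d \<le> real n powr d" using assms by (intro powr_mono2) auto
    moreover have "(T' powr (1 / d)) powr d = T'" using assms by (simp add: powr_powr T'_def)
    ultimately show ?thesis by (simp add: T'_def)
  qed
  thus ?thesis by blast
qed

lemma beta_ev:
  fixes \<beta> :: "nat \<Rightarrow> real"
  assumes lim: "(\<lambda>n. \<beta> n / (\<epsilon> * real n powr \<delta>)) \<longlonglongrightarrow> 0" and e: "0 < \<epsilon>" and tau: "0 < \<tau>"
  shows "\<exists>N. \<forall>n\<ge>N. \<beta> n < \<tau> * (\<epsilon> * real n powr \<delta>)"
proof -
  obtain N0 where N0: "\<forall>n\<ge>N0. norm (\<beta> n / (\<epsilon> * real n powr \<delta>) - 0) < \<tau>"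
    using LIMSEQ_D[OF lim tau] by blast
  have "\<beta> n < \<tau> * (\<epsilon> * real n powr \<delta>)" if "n \<ge> max N0 1" for n
  proof -
    have pos: "0 < \<epsilon> * real n powr \<delta>" using that e by simp
    have "norm (\<beta> n / (\<epsilon> * real n powr \<delta>) - 0) < \<tau>" using N0 that by auto
    hence "\<bar>\<beta> n / (\<epsilon> * real n powr \<delta>)\<bar> < \<tau>" by (simp only: real_norm_def diff_zero)
    hence "\<beta> n / (\<epsilon> * real n powr \<delta>) < \<tau>" by linarith
    thus ?thesis using pos by (simp add: divide_less_eq)
  qed
  thus ?thesis by blast
qed

theorem theorem2p1:
  "\<exists>c > 0. \<forall>\<epsilon> > 0. \<forall>\<delta>. 0 < \<delta> \<and> \<delta> < 1/2 \<longrightarrow>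
     (\<forall>\<beta> :: nat \<Rightarrow> real.
        (\<lambda>n. \<beta> n / (\<epsilon> * real n powr \<delta>)) \<longlonglongrightarrow> 0 \<longrightarrow>
        (\<exists>N. \<forall>n \<ge> N. \<forall>A :: algorithm.
           competitive_on A (alpha_lb - \<epsilon>) (\<beta> n) n \<longrightarrow>
           (\<exists>\<sigma>. valid_input \<sigma> \<and> input_size_le \<sigma> n \<and> length \<sigma> > 0 \<and>
                 real (total_moves A \<sigma>)
                   \<ge> c * \<epsilon>\<^sup>2 * real n powr (1 - \<delta>) * real (length \<sigma>))))"
proof (intro exI[of _ "1 / 147456"] conjI allI impI)
  show "(0::real) < 1 / 147456" by simp
  fix \<epsilon> :: real and \<delta> :: real and \<beta> :: "nat \<Rightarrow> real"
  assume e: "0 < \<epsilon>" and d: "0 < \<delta> \<and> \<delta> < 1/2"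
    and lim: "(\<lambda>n. \<beta> n / (\<epsilon> * real n powr \<delta>)) \<longlonglongrightarrow> 0"
  have AF: "1/3 \<le> astar" "astar \<le> 1/2" using astar_facts by auto
  have d1: "0 < 1 - \<delta>" using d by simp
  show "\<exists>N. \<forall>n \<ge> N. \<forall>A :: algorithm.
           competitive_on A (alpha_lb - \<epsilon>) (\<beta> n) n \<longrightarrow>
           (\<exists>\<sigma>. valid_input \<sigma> \<and> input_size_le \<sigma> n \<and> length \<sigma> > 0 \<and>
                 real (total_moves A \<sigma>)
                   \<ge> 1 / 147456 * \<epsilon>\<^sup>2 * real n powr (1 - \<delta>) * real (length \<sigma>))"
  proof (cases "\<epsilon> < 2 * astar")
    case True
    obtain N1 where N1: "\<forall>n\<ge>N1. 16 + 4096 / \<epsilon> \<le> real n powr \<delta>" using powr_ev d by blast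
    obtain N2 where N2: "\<forall>n\<ge>N2. 384 + 20480 / \<epsilon> \<le> real n powr (1 - \<delta>)" using powr_ev[OF d1] by blast
    obtain N3 where N3: "\<forall>n\<ge>N3. \<beta> n < 1 / 2048 * (\<epsilon> * real n powr \<delta>)"
      using beta_ev[OF lim e, of "1/2048"] by auto
    show ?thesis
    proof (intro exI[of _ "max (max N1 N2) (max N3 1)"] allI impI)
      fix n A assume n: "max (max N1 N2) (max N3 1) \<le> n" and comp: "competitive_on A (alpha_lb - \<epsilon>) (\<beta> n) n"
      have b: "\<beta> n < \<epsilon> * real n powr \<delta> / 2048" using N3 n by auto
      from main_for_n[of \<delta> \<epsilon> n "\<beta> n" A] d e True n N1 N2 b comp
      show "\<exists>\<sigma>. valid_input \<sigma> \<and> input_size_le \<sigma> n \<and> length \<sigma> > 0 \<and>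
                 real (total_moves A \<sigma>) \<ge> 1 / 147456 * \<epsilon>\<^sup>2 * real n powr (1 - \<delta>) * real (length \<sigma>)"
        by auto
    qed
  next
    case False
    obtain N1 where N1: "\<forall>n\<ge>N1. 16 \<le> real n powr \<delta>" using powr_ev d by blast
    have tau: "0 < astar / (32 * \<epsilon>)" using AF e by simp
    obtain N3 where N3: "\<forall>n\<ge>N3. \<beta> n < astar / (32 * \<epsilon>) * (\<epsilon> * real n powr \<delta>)"
      using beta_ev[OF lim e tau] by auto
    show ?thesis
    proof (intro exI[of _ "max N1 (max N3 1)"] allI impI)
      fix n A assume n: "max N1 (max N3 1) \<le> n" and comp: "competitive_on A (alpha_lb - \<epsilon>) (\<beta> n) n"
      define U where "U = real n powr \<delta>"
      define K where "K = nat \<lfloor>U / 8\<rfloor>"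
      have U16: "16 \<le> U" using N1 n by (simp add: U_def)
      have Kb: "real K \<le> U / 8" "U / 8 - 1 < real K" using nat_floor_bounds[of "U/8"] U16 by (auto simp: K_def)
      have Un: "U \<le> real n" unfolding U_def using n d by (intro order_trans[OF powr_mono[of \<delta> 1]]) auto
      have K0: "0 < K" using Kb U16 by simp
      have Kn: "K * 1 \<le> n" using Kb Un by simp
      have b: "\<beta> n < astar * real K"
      proof -
        have "\<beta> n < astar / (32 * \<epsilon>) * (\<epsilon> * U)" using N3 n by (auto simp: U_def)
        also have "\<dots> = astar * (U / 32)" using e by simp
        also have "\<dots> \<le> astar * real K" using Kb U16 AF by (intro mult_left_mono) auto
        finally show ?thesis .
      qed
      have r: "alpha_lb - \<epsilon> \<le> 1 - astar" using False by (simp add: astar_def)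
      from vacuous_case[OF comp r K0 _ Kn b] show "\<exists>\<sigma>. valid_input \<sigma> \<and> input_size_le \<sigma> n \<and> length \<sigma> > 0 \<and>
                 real (total_moves A \<sigma>) \<ge> 1 / 147456 * \<epsilon>\<^sup>2 * real n powr (1 - \<delta>) * real (length \<sigma>)"
        by simp
    qed
  qed
qed


end
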